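(* Let $f=\min_{1\le j\le m}\{a_j+\sum_{i=1}^n t_{j,i}X_i\}$ be a tropical polynomial in $n$ variables, and for $N\ge 1$ let $U_N\subset\mathbb{R}^{N^n}$ be the set of points satisfying all linearizations of $f$ on the grid $T_N$. Then for every partition of the grid $T_N$ into subgrids that are cubes with sides $q_1,\dots,q_R$ one has $\dim(U_N)\le \dim(U_{q_1})+\dots+\dim(U_{q_R})$. Consequently the limit $$H(f):=\lim_{N\to\infty}\frac{\dim(U_N)}{N^n}$$ exists and equals $\inf_{N\ge 1}\dim(U_N)/N^n$.
   Context: A tropical polynomial in $n$ variables is an expression $f=\min_{1\le j\le m}\{a_j+\sum_{i=1}^n t_{j,i}X_i\}$ with $a_j\in\mathbb{R}$ and pairwise distinct exponent vectors $(t_{j,1},\dots,t_{j,n})\in\mathbb{Z}^n$. For an integer $N\ge1$ let $T_N=\{0,\dots,N-1\}^n\subset\mathbb{Z}^n$, and consider variables $u(k_1,\dots,k_n)$, $(k_1,\dots,k_n)\in T_N$, so that points $u$ lie in $\mathbb{R}^{T_N}\cong\mathbb{R}^{N^n}$. For each shift $(s_1,\dots,s_n)\in\mathbb{Z}^n$ such that $(t_{j,1}+s_1,\dots,t_{j,n}+s_n)\in T_N$ for all $1\le j\le m$, the linearization of $f$ with this shift is the tropical linear form $\min_{1\le j\le m}\{a_j+u(t_{j,1}+s_1,\dots,t_{j,n}+s_n)\}$; a point $u$ satisfies it if this minimum is attained at least twice. $U_N$ is the set of all $u\in\mathbb{R}^{N^n}$ satisfying all such linearizations; it is a finite union of convex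 polyhedra and $\dim$ denotes its dimension (maximal dimension of a polyhedron in it). A subgrid with side $q$ is a translate $v+T_q\subset T_N$, identified with $T_q$ via the translation. *)

theory Defs
  imports "HOL-Analysis.Analysis"
begin

text \<open>Lattice points of Z^n are represented as functions nat => int that vanish
  at all coordinates i >= n.  The grid T_N = {0,...,N-1}^n:\<close>

definition grid :: "nat \<Rightarrow> nat \<Rightarrow> (nat \<Rightarrow> int) set" where
  "grid n N = {k. (\<forall>i<n. 0 \<le> k i \<and> k i < int N) \<and> (\<forall>i\<ge>n. k i = 0)}"

definition subgrid :: "nat \<Rightarrow> (nat \<Rightarrow> int) \<Rightarrow> nat \<Rightarrow> (nat \<Rightarrow> int) set" where
  "subgrid n v q = {(\<lambda>i. v i + k i) | k. k \<in> grid n q}"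

text \<open>The tropical polynomial f = min_{j<m} (a j + sum_{i<n} t j i * X_i).
  Exponent vector of monomial j shifted by s (only coordinates i < n are used).\<close>

definition shifted :: "nat \<Rightarrow> (nat \<Rightarrow> nat \<Rightarrow> int) \<Rightarrow> nat \<Rightarrow> (nat \<Rightarrow> int) \<Rightarrow> (nat \<Rightarrow> int)" where
  "shifted n t j s = (\<lambda>i. if i < n then t j i + s i else 0)"

definition admissible_shift ::
  "nat \<Rightarrow> nat \<Rightarrow> (nat \<Rightarrow> nat \<Rightarrow> int) \<Rightarrow> nat \<Rightarrow> (nat \<Rightarrow> int) \<Rightarrow> bool" where
  "admissible_shift n m t N s \<longleftrightarrow>
     (\<forall>i\<ge>n. s i = 0) \<and> (\<forall>j<m. shifted n t j s \<in> grid n N)"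

definition sat_linearization ::
  "nat \<Rightarrow> nat \<Rightarrow> (nat \<Rightarrow> real) \<Rightarrow> (nat \<Rightarrow> nat \<Rightarrow> int) \<Rightarrow> (nat \<Rightarrow> int) \<Rightarrow> ((nat \<Rightarrow> int) \<Rightarrow> real) \<Rightarrow> bool" where
  "sat_linearization n m a t s u \<longleftrightarrow>
     (\<exists>j1<m. \<exists>j2<m. j1 \<noteq> j2 \<and>
        a j1 + u (shifted n t j1 s) = a j2 + u (shifted n t j2 s) \<and>
        (\<forall>j<m. a j1 + u (shifted n t j1 s) \<le> a j + u (shifted n t j s)))"

text \<open>Points of R^{T_N} are functions (nat => int) => real vanishing outside T_N.
  U_N is the set of such points satisfying all linearizations.\<close>

definition U_set ::
  "nat \<Rightarrow> nat \<Rightarrow> (nat \<Rightarrow> real) \<Rightarrow> (nat \<Rightarrow> nat \<Rightarrow> int) \<Rightarrow> nat \<Rightarrow> ((nat \<Rightarrow> int) \<Rightarrow> real) set" where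
  "U_set n m a t N =
     {u. (\<forall>k. k \<notin> grid n N \<longrightarrow> u k = 0) \<and>
         (\<forall>s. admissible_shift n m t N s \<longrightarrow> sat_linearization n m a t s u)}"

definition polyhedron_on :: "'a set \<Rightarrow> ('a \<Rightarrow> real) set \<Rightarrow> bool" where
  "polyhedron_on T P \<longleftrightarrow>
     (\<exists>C :: (('a \<Rightarrow> real) \<times> real) set. finite C \<and>
        P = {u. (\<forall>k. k \<notin> T \<longrightarrow> u k = 0) \<and> (\<forall>(c, b)\<in>C. (\<Sum>k\<in>T. c k * u k) \<le> b)})"

definition aff_indep_on :: "'a set \<Rightarrow> (nat \<Rightarrow> 'a \<Rightarrow> real) \<Rightarrow> nat \<Rightarrow> bool" where
  "aff_indep_on T p d \<longleftrightarrow>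
     (\<forall>c :: nat \<Rightarrow> real. (\<forall>k\<in>T. (\<Sum>i\<in>{1..d}. c i * (p i k - p 0 k)) = 0)
        \<longrightarrow> (\<forall>i\<in>{1..d}. c i = 0))"

definition affdim_on :: "'a set \<Rightarrow> ('a \<Rightarrow> real) set \<Rightarrow> int" where
  "affdim_on T P = (if P = {} then -1 else
     Max {int d | d. \<exists>p. (\<forall>i\<le>d. p i \<in> P) \<and> aff_indep_on T p d})"

text \<open>Dimension of a finite union of convex polyhedra: maximal dimension of a
  polyhedron contained in it.\<close>

definition pdim_on :: "'a set \<Rightarrow> ('a \<Rightarrow> real) set \<Rightarrow> int" where
  "pdim_on T S = Max {affdim_on T P | P. polyhedron_on T P \<and> P \<subseteq> S}"

definition dimU :: "nat \<Rightarrow> nat \<Rightarrow> (nat \<Rightarrow> real) \<Rightarrow> (nat \<Rightarrow> nat \<Rightarrow> int) \<Rightarrow> nat \<Rightarrow> int" where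
  "dimU n m a t N = pdim_on (grid n N) (U_set n m a t N)"

end

theory Submission
  imports Defs "HOL-Library.Function_Algebras" "HOL-Computational_Algebra.Polynomial"
begin


global_interpretation fv: vector_space "\<lambda>(c::real) (f::'a \<Rightarrow> real) k. c * f k"
  by unfold_locales (auto simp: fun_eq_iff algebra_simps)

lemma sum_fun_apply: "(\<Sum>a\<in>A. f a) x = (\<Sum>a\<in>A. f a x)"
  by (induction A rule: infinite_finite_induct) auto

lemma sum_two_points:
  fixes X :: "nat \<Rightarrow> real"
  assumes "i \<in> I" "j \<in> I" "i \<noteq> j" "finite I"
  shows "(\<Sum>l\<in>I. (if l = i then 1 else if l = j then -1 else 0) * X l) = X i - X j"
proof -
  have "(\<Sum>l\<in>I. (if l = i then 1 else if l = j then -1 else 0) * X l)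
      = (\<Sum>l\<in>I. (if l = i then X i else 0) + (if l = j then - X j else 0))"
    by (rule sum.cong) (use assms in auto)
  also have "\<dots> = X i - X j" using assms by (simp add: sum.distrib)
  finally show ?thesis .
qed

lemma aff_indep_W:
  assumes ai: "aff_indep_on T p d" and fT: "finite T"
  defines "w \<equiv> \<lambda>i k. if k \<in> T then p i k - p 0 k else 0"
  shows "inj_on w {1..d}" and "fv.independent (w ` {1..d})"
proof -
  show inj: "inj_on w {1..d}"
  proof (rule inj_onI, rule ccontr)
    fix i j assume ij: "i \<in> {1..d}" "j \<in> {1..d}" "w i = w j" "i \<noteq> j"
    define c where "c = (\<lambda>l::nat. if l = i then 1 else if l = j then -1 else (0::real))"
    have "\<forall>k\<in>T. (\<Sum>l\<in>{1..d}. c l * (p l k - p 0 k)) = 0"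
    proof
      fix k assume k: "k \<in> T"
      have "(\<Sum>l\<in>{1..d}. c l * (p l k - p 0 k)) = (p i k - p 0 k) - (p j k - p 0 k)"
        unfolding c_def by (rule sum_two_points) (use ij in auto)
      also have "\<dots> = w i k - w j k" using k by (simp add: w_def)
      finally show "(\<Sum>l\<in>{1..d}. c l * (p l k - p 0 k)) = 0" using ij by simp
    qed
    with ai ij have "c i = 0" unfolding aff_indep_on_def by blast
    then show False by (simp add: c_def)
  qed
  show "fv.independent (w ` {1..d})"
  proof (rule fv.independent_if_scalars_zero)
    show "finite (w ` {1..d})" by simp
    fix f x assume s: "(\<Sum>x\<in>w ` {1..d}. (\<lambda>k. f x * x k)) = 0" and x: "x \<in> w ` {1..d}"
    have s2: "(\<Sum>i\<in>{1..d}. (\<lambda>k. f (w i) * w i k)) = 0"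
      using s sum.reindex[OF inj, of "\<lambda>x. (\<lambda>k. f x * x k)"] by (simp add: o_def)
    have "\<forall>k\<in>T. (\<Sum>i\<in>{1..d}. (f \<circ> w) i * (p i k - p 0 k)) = 0"
    proof
      fix k assume k: "k \<in> T"
      have "(\<Sum>i\<in>{1..d}. (\<lambda>k. f (w i) * w i k)) k = 0" using s2 by simp
      then show "(\<Sum>i\<in>{1..d}. (f \<circ> w) i * (p i k - p 0 k)) = 0"
        using k by (simp add: sum_fun_apply w_def)
    qed
    with ai have "\<forall>i\<in>{1..d}. (f \<circ> w) i = 0" unfolding aff_indep_on_def by blast
    with x show "f x = 0" by auto
  qed
qed

definition ind :: "'a \<Rightarrow> 'a \<Rightarrow> real" where "ind k0 = (\<lambda>k. if k = k0 then 1 else 0)"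

lemma sum_ind_mult:
  assumes "finite T" "k0 \<in> T"
  shows "(\<Sum>k\<in>T. ind k0 k * u k) = u k0"
proof -
  have "(\<Sum>k\<in>T. ind k0 k * u k) = (\<Sum>k\<in>T. if k = k0 then u k0 else 0)"
    by (rule sum.cong) (auto simp: ind_def)
  then show ?thesis using assms by simp
qed

lemma in_span_ind:
  assumes "finite T" "\<forall>k. k \<notin> T \<longrightarrow> w k = 0"
  shows "w \<in> fv.span (ind ` T)"
proof -
  have "w = (\<Sum>k0\<in>T. (\<lambda>k. w k0 * ind k0 k))"
  proof
    fix k show "w k = (\<Sum>k0\<in>T. (\<lambda>k. w k0 * ind k0 k)) k"
      using assms by (cases "k \<in> T") (auto simp: sum_fun_apply ind_def if_distrib cong: if_cong)
  qed
  also have "\<dots> \<in> fv.span (ind ` T)"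
    by (intro fv.span_sum fv.span_scale fv.span_base) auto
  finally show ?thesis .
qed

lemma aff_indep_bound:
  assumes ai: "aff_indep_on T p d" and fT: "finite T"
  shows "d \<le> card T"
proof -
  define w where "w \<equiv> \<lambda>i k. if k \<in> T then p i k - p 0 k else 0"
  have inj: "inj_on w {1..d}" and ind: "fv.independent (w ` {1..d})"
    using aff_indep_W[OF ai fT] unfolding w_def by auto
  have "w ` {1..d} \<subseteq> fv.span (ind ` T)"
    using fT by (auto intro!: in_span_ind simp: w_def)
  from fv.independent_span_bound[OF _ ind this] fT
  have "card (w ` {1..d}) \<le> card (ind ` T)" by simp
  also have "\<dots> \<le> card T" by (rule card_image_le[OF fT])
  finally show ?thesis using card_image[OF inj] by simp
qed

lemma affdim_set_finite:
  assumes "finite T"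
  shows "finite {int d | d. \<exists>p. (\<forall>i\<le>d. p i \<in> P) \<and> aff_indep_on T p d}"
proof (rule finite_subset)
  show "{int d | d. \<exists>p. (\<forall>i\<le>d. p i \<in> P) \<and> aff_indep_on T p d} \<subseteq> int ` {0..card T}"
    using aff_indep_bound[OF _ assms] by auto
qed simp

lemma affdim_ge:
  assumes "finite T" "\<forall>i\<le>d. p i \<in> P" "aff_indep_on T p d"
  shows "int d \<le> affdim_on T P"
proof -
  have "P \<noteq> {}" using assms(2) by auto
  then show ?thesis unfolding affdim_on_def using assms
    by (auto intro!: Max_ge affdim_set_finite)
qed

lemma affdim_ex:
  assumes "finite T" "P \<noteq> {}"
  shows "\<exists>d p. affdim_on T P = int d \<and> (\<forall>i\<le>d. p i \<in> P) \<and> aff_indep_on T p d"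
proof -
  obtain x where x: "x \<in> P" using assms by auto
  have ne: "{int d | d. \<exists>p. (\<forall>i\<le>d. p i \<in> P) \<and> aff_indep_on T p d} \<noteq> {}"
    using x by (auto intro!: exI[of _ 0] exI[of _ "\<lambda>_. x"] simp: aff_indep_on_def)
  have "affdim_on T P \<in> {int d | d. \<exists>p. (\<forall>i\<le>d. p i \<in> P) \<and> aff_indep_on T p d}"
    unfolding affdim_on_def if_not_P[OF assms(2)] by (rule Max_in[OF affdim_set_finite[OF assms(1)] ne])
  then show ?thesis by blast
qed

lemma affdim_bounds:
  assumes "finite T"
  shows "-1 \<le> affdim_on T P" "affdim_on T P \<le> int (card T)"
proof -
  show "-1 \<le> affdim_on T P"
    using affdim_ex[OF assms, of P] by (cases "P = {}") (auto simp: affdim_on_def)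
  show "affdim_on T P \<le> int (card T)"
    using affdim_ex[OF assms, of P] aff_indep_bound[OF _ assms] by (cases "P = {}") (auto simp: affdim_on_def)
qed

lemma polyhedron_empty: "polyhedron_on T {}"
  unfolding polyhedron_on_def by (rule exI[of _ "{(\<lambda>_. 0, -1)}"]) auto

lemma pdim_set_finite:
  assumes "finite T"
  shows "finite {affdim_on T P | P. polyhedron_on T P \<and> P \<subseteq> S}"
  by (rule finite_subset[of _ "{-1..int (card T)}"]) (use affdim_bounds[OF assms] in auto)

lemma pdim_ge:
  assumes "finite T" "polyhedron_on T Q" "Q \<subseteq> S"
  shows "affdim_on T Q \<le> pdim_on T S"
  unfolding pdim_on_def using assms by (auto intro!: Max_ge pdim_set_finite)

lemma pdim_le:
  assumes "finite T" "\<And>P. polyhedron_on T P \<Longrightarrow> P \<subseteq> S \<Longrightarrow> affdim_on T P \<le> X"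
  shows "pdim_on T S \<le> X"
  unfolding pdim_on_def using assms polyhedron_empty[of T]
  by (subst Max_le_iff) (auto intro!: pdim_set_finite)

lemma pdim_lower: "finite T \<Longrightarrow> -1 \<le> pdim_on T S"
proof -
  assume "finite T"
  moreover have "affdim_on T {} = -1" by (simp add: affdim_on_def)
  ultimately show ?thesis using pdim_ge[of T "{}" S] polyhedron_empty[of T] by force
qed

lemma pdim_upper: "finite T \<Longrightarrow> pdim_on T S \<le> int (card T)"
  by (rule pdim_le) (use affdim_bounds in auto)

lemma polyhedron_singleton:
  assumes fT: "finite T" and u0: "\<forall>k. k \<notin> T \<longrightarrow> u0 k = 0"
  shows "polyhedron_on T {u0}"
  unfolding polyhedron_on_def
proof (intro exI conjI)
  let ?C = "(\<lambda>k. (ind k, u0 k)) ` T \<union> (\<lambda>k. (\<lambda>x. - ind k x, - u0 k)) ` T"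
  show "finite ?C" using fT by simp
  have neg: "(\<Sum>x\<in>T. - ind k x * u x) = - u k" if "k \<in> T" for k u
    using sum_ind_mult[OF fT that, of u] by (simp add: sum_negf)
  have neg2: "(\<Sum>x\<in>T. - (ind k x * u x)) = - u k" if "k \<in> T" for k u
    using sum_ind_mult[OF fT that, of u] by (simp add: sum_negf)
  show "{u0} = {u. (\<forall>k. k \<notin> T \<longrightarrow> u k = 0) \<and> (\<forall>(c, b)\<in>?C. (\<Sum>k\<in>T. c k * u k) \<le> b)}"
  proof (intro set_eqI iffI)
    fix u assume "u \<in> {u0}" then show "u \<in> {u. (\<forall>k. k \<notin> T \<longrightarrow> u k = 0) \<and> (\<forall>(c, b)\<in>?C. (\<Sum>k\<in>T. c k * u k) \<le> b)}"
      using u0 by (auto simp: sum_ind_mult[OF fT] neg neg2)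
  next
    fix u assume "u \<in> {u. (\<forall>k. k \<notin> T \<longrightarrow> u k = 0) \<and> (\<forall>(c, b)\<in>?C. (\<Sum>k\<in>T. c k * u k) \<le> b)}"
    then have h0: "\<forall>k. k \<notin> T \<longrightarrow> u k = 0" and hC: "\<forall>(c, b)\<in>?C. (\<Sum>k\<in>T. c k * u k) \<le> b"
      by auto
    have hk: "u k \<le> u0 k \<and> - u k \<le> - u0 k" if k: "k \<in> T" for k
    proof -
      have m1: "(ind k, u0 k) \<in> ?C" and m2: "((\<lambda>x. - ind k x), - u0 k) \<in> ?C" using k by auto
      from bspec[OF hC m1] have 1: "u k \<le> u0 k" by (simp add: sum_ind_mult[OF fT k])
      from bspec[OF hC m2] have "(\<Sum>x\<in>T. - ind k x * u x) \<le> - u0 k" by simp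
      then show ?thesis using neg[OF k] 1 by simp
    qed
    have h: "\<forall>k. k \<notin> T \<longrightarrow> u k = 0" "\<forall>k\<in>T. u k \<le> u0 k" "\<forall>k\<in>T. - u k \<le> - u0 k"
      using h0 hk by auto
    have "u = u0"
    proof
      fix k show "u k = u0 k" using h u0 by (cases "k \<in> T") force+
    qed
    then show "u \<in> {u0}" by simp
  qed
qed

lemma pdim_nonneg:
  assumes "finite T" "u0 \<in> S" "\<forall>k. k \<notin> T \<longrightarrow> u0 k = 0"
  shows "0 \<le> pdim_on T S"
proof -
  have "int 0 \<le> affdim_on T {u0}"
    by (rule affdim_ge[OF assms(1), of 0 "\<lambda>_. u0"]) (auto simp: aff_indep_on_def)
  also have "\<dots> \<le> pdim_on T S"
    by (rule pdim_ge) (use assms polyhedron_singleton in auto)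
  finally show ?thesis by simp
qed

lemma grid_eq_image:
  "grid n N = (\<lambda>f i. if i < n then f i else 0) ` (PiE {..<n} (\<lambda>_. {0..<int N}))"
proof (intro set_eqI iffI)
  fix k assume k: "k \<in> grid n N"
  have "k = (\<lambda>i. if i < n then restrict k {..<n} i else 0)"
    using k by (auto simp: grid_def fun_eq_iff)
  moreover have "restrict k {..<n} \<in> PiE {..<n} (\<lambda>_. {0..<int N})"
    using k by (auto simp: grid_def)
  ultimately show "k \<in> (\<lambda>f i. if i < n then f i else 0) ` (PiE {..<n} (\<lambda>_. {0..<int N}))"
    by blast
qed (auto simp: grid_def PiE_def Pi_def)

lemma finite_grid: "finite (grid n N)"
  unfolding grid_eq_image by (intro finite_imageI finite_PiE) auto

lemma card_grid: "card (grid n N) = N ^ n"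
proof -
  have "inj_on (\<lambda>f i. if i < n then f i else (0::int)) (PiE {..<n} (\<lambda>_. {0..<int N}))"
  proof (rule inj_onI)
    fix f g assume f: "f \<in> PiE {..<n} (\<lambda>_. {0..<int N})" and g: "g \<in> PiE {..<n} (\<lambda>_. {0..<int N})"
      and e: "(\<lambda>i. if i < n then f i else 0) = (\<lambda>i. if i < n then g i else 0)"
    show "f = g"
    proof
      fix i show "f i = g i"
        using f g fun_cong[OF e, of i] by (cases "i < n") (auto simp: PiE_def extensional_def)
    qed
  qed
  then have "card (grid n N) = card (PiE {..<n} (\<lambda>_. {0..<int N}))"
    unfolding grid_eq_image by (rule card_image)
  also have "\<dots> = N ^ n" by (simp add: card_PiE)
  finally show ?thesis .
qed

lemma zero_in_grid: "N \<ge> 1 \<Longrightarrow> (\<lambda>_. 0) \<in> grid n N"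
  by (auto simp: grid_def)

lemma finite_adm:
  assumes "0 < m"
  shows "finite {s. admissible_shift n m t N s}"
proof (rule finite_subset)
  show "{s. admissible_shift n m t N s} \<subseteq> (\<lambda>k i. if i < n then k i - t 0 i else 0) ` grid n N"
  proof
    fix s assume s: "s \<in> {s. admissible_shift n m t N s}"
    then have "shifted n t 0 s \<in> grid n N" using assms by (auto simp: admissible_shift_def)
    moreover have "s = (\<lambda>i. if i < n then shifted n t 0 s i - t 0 i else 0)"
      using s by (auto simp: admissible_shift_def shifted_def fun_eq_iff)
    ultimately show "s \<in> (\<lambda>k i. if i < n then k i - t 0 i else 0) ` grid n N" by blast
  qed
qed (simp add: finite_grid)

lemma tropical_point:
  fixes c :: "nat \<Rightarrow> real" and a :: "nat \<Rightarrow> real"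
  assumes "0 < m" "j0' < m" "j1' < m" "c j0' \<noteq> c j1'"
  shows "\<exists>L j0 j1. j0 < m \<and> j1 < m \<and> j0 \<noteq> j1 \<and> a j0 - L * c j0 = a j1 - L * c j1 \<and>
            (\<forall>j<m. a j0 - L * c j0 \<le> a j - L * c j)"
proof -
  define cmin where "cmin = Min (c ` {..<m})"
  have cmin: "\<And>j. j < m \<Longrightarrow> cmin \<le> c j" unfolding cmin_def by auto
  have "cmin \<in> c ` {..<m}" unfolding cmin_def using assms by (intro Min_in) auto
  then obtain jm where jm: "jm < m" "c jm = cmin" by auto
  define S0 where "S0 = {j. j < m \<and> c j = cmin}"
  have S0: "finite S0" "S0 \<noteq> {}" using jm by (auto simp: S0_def)
  define j0 where "j0 = arg_min_on a S0"
  have j0: "j0 \<in> S0" "\<And>j. j \<in> S0 \<Longrightarrow> a j0 \<le> a j"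
    using arg_min_if_finite[OF S0, of a] arg_min_least[OF S0, of _ a] unfolding j0_def by auto
  define S1 where "S1 = {j. j < m \<and> cmin < c j}"
  have "S1 \<noteq> {}"
  proof
    assume "S1 = {}"
    then have "c j0' = cmin" "c j1' = cmin" using cmin assms unfolding S1_def by force+
    with assms show False by simp
  qed
  have S1: "finite S1" "S1 \<noteq> {}" using \<open>S1 \<noteq> {}\<close> by (auto simp: S1_def)
  define lam where "lam j = (a j - a j0) / (c j - c j0)" for j
  define j1 where "j1 = arg_min_on lam S1"
  have j1: "j1 \<in> S1" "\<And>j. j \<in> S1 \<Longrightarrow> lam j1 \<le> lam j"
    using arg_min_if_finite[OF S1, of lam] arg_min_least[OF S1, of _ lam] unfolding j1_def by auto
  define L where "L = lam j1"
  have cj0: "c j0 = cmin" "j0 < m" using j0 by (auto simp: S0_def)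
  have key: "a j0 - L * c j0 \<le> a j - L * c j" if j: "j < m" for j
  proof (cases "c j = cmin")
    case True
    then have "j \<in> S0" using j by (simp add: S0_def)
    then show ?thesis using j0 cj0 True by auto
  next
    case False
    then have jS1: "j \<in> S1" using cmin[OF j] j by (auto simp: S1_def)
    then have pos: "c j - c j0 > 0" using cj0 by (auto simp: S1_def)
    have "L \<le> (a j - a j0) / (c j - c j0)" using j1(2)[OF jS1] by (simp add: L_def lam_def)
    then have "L * (c j - c j0) \<le> a j - a j0" using pos by (simp add: le_divide_eq)
    then show ?thesis by (simp add: algebra_simps)
  qed
  have pos1: "c j1 - c j0 > 0" using j1(1) cj0 by (auto simp: S1_def)
  have eq: "a j0 - L * c j0 = a j1 - L * c j1"
    using pos1 by (simp add: L_def lam_def field_simps)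
  have "j0 \<noteq> j1" using pos1 by auto
  moreover have "j1 < m" using j1(1) by (simp add: S1_def)
  ultimately show ?thesis using key eq cj0 by blast
qed

lemma U_nonempty:
  assumes m2: "m \<ge> 2"
    and distinct_exps: "\<forall>j<m. \<forall>j'<m. j \<noteq> j' \<longrightarrow> (\<exists>i<n. t j i \<noteq> t j' i)"
  shows "\<exists>u. u \<in> U_set n m a t N"
proof -
  have "\<exists>i<n. t 0 i \<noteq> t 1 i" using distinct_exps m2 by (metis less_le_trans one_less_numeral_iff pos2 semiring_norm(76) zero_neq_one)
  then obtain i0 where i0: "i0 < n" "t 0 i0 \<noteq> t 1 i0" by blast
  define c where "c j = real_of_int (t j i0)" for j
  obtain L j0 j1 where L: "j0 < m" "j1 < m" "j0 \<noteq> j1" "a j0 - L * c j0 = a j1 - L * c j1"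
    "\<forall>j<m. a j0 - L * c j0 \<le> a j - L * c j"
    using tropical_point[of m 0 1 c a] m2 i0 by (auto simp: c_def)
  define u where "u = (\<lambda>k. if k \<in> grid n N then - L * real_of_int (k i0) else 0)"
  have "u \<in> U_set n m a t N"
    unfolding U_set_def
  proof (intro CollectI conjI allI impI)
    fix k assume "k \<notin> grid n N" then show "u k = 0" by (simp add: u_def)
  next
    fix s assume s: "admissible_shift n m t N s"
    have val: "a j + u (shifted n t j s) = (a j - L * c j) - L * real_of_int (s i0)" if j: "j < m" for j
    proof -
      have "shifted n t j s \<in> grid n N" using s j by (simp add: admissible_shift_def)
      then show ?thesis using i0 by (simp add: u_def shifted_def c_def algebra_simps)
    qed
    show "sat_linearization n m a t s u"
      unfolding sat_linearization_def
      using L by (intro exI[of _ j0] exI[of _ j1]) (auto simp: val)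
  qed
  then show ?thesis by blast
qed




lemma eventually_not_in_finite:
  assumes "finite Z"
  shows "eventually (\<lambda>x. x \<notin> Z) (at_right (0::real))"
proof -
  define b where "b = Min (insert 1 {z\<in>Z. z > 0})"
  have fin: "finite (insert 1 {z\<in>Z. z > 0})" using assms by simp
  have "b > 0" unfolding b_def using fin by (subst Min_gr_iff) auto
  moreover have "\<forall>y>0. y < b \<longrightarrow> y \<notin> Z"
  proof (intro allI impI)
    fix y :: real assume y: "y > 0" "y < b"
    show "y \<notin> Z"
    proof
      assume "y \<in> Z"
      then have "b \<le> y" unfolding b_def using fin y by (intro Min_le) auto
      with y show False by simp
    qed
  qed
  ultimately show ?thesis unfolding eventually_at_right_field by blast
qed

lemma eventually_poly_nonzero:
  fixes cf :: "nat \<Rightarrow> real"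
  assumes "\<exists>i\<le>d. cf i \<noteq> 0"
  shows "eventually (\<lambda>x. (\<Sum>i\<le>d. cf i * x ^ i) \<noteq> 0) (at_right 0)"
proof -
  define pol where "pol = (\<Sum>i\<le>d. monom (cf i) i)"
  have "pol \<noteq> 0"
  proof
    assume "pol = 0"
    then have "\<forall>i\<le>d. cf i = 0" using coeff_sum_monom[of _ d cf] unfolding pol_def by (metis coeff_0)
    with assms show False by blast
  qed
  then have "finite {x. poly pol x = 0}" by (rule poly_roots_finite)
  from eventually_not_in_finite[OF this] show ?thesis
    by eventually_elim (simp add: pol_def poly_sum poly_monom)
qed

definition Xg :: "(nat \<Rightarrow> 'a \<Rightarrow> real) \<Rightarrow> nat \<Rightarrow> real \<Rightarrow> 'a \<Rightarrow> real" where
  "Xg p d e = (\<lambda>k. p 0 k + (\<Sum>i\<in>{1..d}. e ^ i * (p i k - p 0 k)))"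

definition Yg :: "(nat \<Rightarrow> 'a \<Rightarrow> real) \<Rightarrow> nat \<Rightarrow> real \<Rightarrow> real \<Rightarrow> nat \<Rightarrow> 'a \<Rightarrow> real" where
  "Yg p d e del i = (\<lambda>k. Xg p d e k + del * (p i k - Xg p d e k))"

definition hv :: "real \<Rightarrow> 'a \<Rightarrow> 'a \<Rightarrow> ('a \<Rightarrow> real) \<Rightarrow> real" where
  "hv \<alpha> k1 k2 u = \<alpha> + u k1 - u k2"

lemma hv_Xg: "hv \<alpha> k1 k2 (Xg p d e) = hv \<alpha> k1 k2 (p 0) + (\<Sum>i\<in>{1..d}. e ^ i * (hv \<alpha> k1 k2 (p i) - hv \<alpha> k1 k2 (p 0)))"
  by (simp add: hv_def Xg_def algebra_simps sum_subtractf[symmetric] sum_distrib_left)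

lemma hv_Yg: "hv \<alpha> k1 k2 (Yg p d e del i) = hv \<alpha> k1 k2 (Xg p d e) + del * (hv \<alpha> k1 k2 (p i) - hv \<alpha> k1 k2 (Xg p d e))"
  by (simp add: hv_def Yg_def algebra_simps)

lemma hv_Xg_poly: "hv \<alpha> k1 k2 (Xg p d e) =
   (\<Sum>i\<le>d. (if i = 0 then hv \<alpha> k1 k2 (p 0) else hv \<alpha> k1 k2 (p i) - hv \<alpha> k1 k2 (p 0)) * e ^ i)"
proof -
  have "{..d} = insert 0 {1..d}" by auto
  moreover have "(\<Sum>x\<in>{1..d}. e ^ x * (hv \<alpha> k1 k2 (p x) - hv \<alpha> k1 k2 (p 0))) =
     (\<Sum>x\<in>{1..d}. (if x = 0 then hv \<alpha> k1 k2 (p 0) else hv \<alpha> k1 k2 (p x) - hv \<alpha> k1 k2 (p 0)) * e ^ x)"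
    by (rule sum.cong) auto
  ultimately show ?thesis
    by (simp add: hv_Xg)
qed

lemma generic_choice:
  fixes p :: "nat \<Rightarrow> 'a \<Rightarrow> real" and F :: "(real \<times> 'a \<times> 'a) set"
  assumes fF: "finite F"
  shows "\<exists>e del. 0 < e \<and> (\<Sum>i\<in>{1..d}. e ^ i) \<le> 1 \<and> 0 < del \<and> del \<le> 1 \<and>
     (\<forall>(\<alpha>,k1,k2)\<in>F.
         (hv \<alpha> k1 k2 (Xg p d e) = 0 \<longrightarrow> (\<forall>i\<le>d. hv \<alpha> k1 k2 (Yg p d e del i) = 0)) \<and>
         (hv \<alpha> k1 k2 (Xg p d e) < 0 \<longrightarrow> (\<forall>i\<le>d. hv \<alpha> k1 k2 (Yg p d e del i) < 0)))"
proof -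
  have nb: "at_right (0::real) \<noteq> bot" by simp
  have ev1: "\<forall>f\<in>F. eventually (\<lambda>e. (\<forall>l\<le>d. hv (fst f) (fst (snd f)) (snd (snd f)) (p l) = 0) \<or>
                 hv (fst f) (fst (snd f)) (snd (snd f)) (Xg p d e) \<noteq> 0) (at_right 0)"
  proof
    fix f assume "f \<in> F"
    obtain \<alpha> k1 k2 where f: "f = (\<alpha>, k1, k2)" by (cases f) auto
    show "eventually (\<lambda>e. (\<forall>l\<le>d. hv (fst f) (fst (snd f)) (snd (snd f)) (p l) = 0) \<or>
                 hv (fst f) (fst (snd f)) (snd (snd f)) (Xg p d e) \<noteq> 0) (at_right 0)"
    proof (cases "\<forall>l\<le>d. hv \<alpha> k1 k2 (p l) = 0")
      case True then show ?thesis by (simp add: f)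
    next
      case False
      then obtain l where l: "l \<le> d" "hv \<alpha> k1 k2 (p l) \<noteq> 0" by blast
      define cf where "cf i = (if i = 0 then hv \<alpha> k1 k2 (p 0) else hv \<alpha> k1 k2 (p i) - hv \<alpha> k1 k2 (p 0))" for i
      have "\<exists>i\<le>d. cf i \<noteq> 0"
      proof (cases "cf 0 = 0")
        case True
        then have "l \<noteq> 0" using l by (cases l) (auto simp: cf_def)
        then have "cf l \<noteq> 0" using l True by (auto simp: cf_def)
        then show ?thesis using l by blast
      qed auto
      from eventually_poly_nonzero[OF this] show ?thesis
        by eventually_elim (simp add: f hv_Xg_poly cf_def)
    qed
  qed
  have ev2: "eventually (\<lambda>e. (\<Sum>i\<in>{1..d}. e ^ i) < 1) (at_right (0::real))"
  proof -
    have "((\<lambda>e. (\<Sum>i\<in>{1..d}. e ^ i)) \<longlongrightarrow> (\<Sum>i\<in>{1..d}. (0::real) ^ i)) (at_right 0)"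
      by (intro tendsto_intros)
    moreover have "(\<Sum>i\<in>{1..d}. (0::real) ^ i) = 0" by (intro sum.neutral) auto
    ultimately have "((\<lambda>e. (\<Sum>i\<in>{1..d}. e ^ i)) \<longlongrightarrow> 0) (at_right (0::real))" by metis
    from order_tendstoD(2)[OF this, of 1] show ?thesis by simp
  qed
  have "eventually (\<lambda>e. 0 < e \<and> (\<Sum>i\<in>{1..d}. e ^ i) < 1 \<and> (\<forall>f\<in>F. (\<forall>l\<le>d. hv (fst f) (fst (snd f)) (snd (snd f)) (p l) = 0) \<or>
                 hv (fst f) (fst (snd f)) (snd (snd f)) (Xg p d e) \<noteq> 0)) (at_right 0)"
    using eventually_at_right_less[of "0::real"] ev2 eventually_ball_finite[OF fF ev1]
    by eventually_elim blast
  then obtain e where e: "0 < e" "(\<Sum>i\<in>{1..d}. e ^ i) < 1"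
    "\<forall>f\<in>F. (\<forall>l\<le>d. hv (fst f) (fst (snd f)) (snd (snd f)) (p l) = 0) \<or>
                 hv (fst f) (fst (snd f)) (snd (snd f)) (Xg p d e) \<noteq> 0"
    using eventually_happens'[OF nb] by blast
  have ev3: "\<forall>f\<in>F. eventually (\<lambda>del. \<forall>i\<in>{..d}.
      hv (fst f) (fst (snd f)) (snd (snd f)) (Xg p d e) < 0 \<longrightarrow>
      hv (fst f) (fst (snd f)) (snd (snd f)) (Yg p d e del i) < 0) (at_right 0)"
  proof
    fix f assume "f \<in> F"
    obtain \<alpha> k1 k2 where f: "f = (\<alpha>, k1, k2)" by (cases f) auto
    have "\<forall>i\<in>{..d}. eventually (\<lambda>del. hv \<alpha> k1 k2 (Xg p d e) < 0 \<longrightarrow> hv \<alpha> k1 k2 (Yg p d e del i) < 0) (at_right 0)"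
    proof
      fix i
      show "eventually (\<lambda>del. hv \<alpha> k1 k2 (Xg p d e) < 0 \<longrightarrow> hv \<alpha> k1 k2 (Yg p d e del i) < 0) (at_right 0)"
      proof (cases "hv \<alpha> k1 k2 (Xg p d e) < 0")
        case True
        have "((\<lambda>del. hv \<alpha> k1 k2 (Xg p d e) + del * (hv \<alpha> k1 k2 (p i) - hv \<alpha> k1 k2 (Xg p d e)))
              \<longlongrightarrow> hv \<alpha> k1 k2 (Xg p d e) + 0 * (hv \<alpha> k1 k2 (p i) - hv \<alpha> k1 k2 (Xg p d e))) (at_right 0)"
          by (intro tendsto_intros)
        then have "eventually (\<lambda>del. hv \<alpha> k1 k2 (Xg p d e) + del * (hv \<alpha> k1 k2 (p i) - hv \<alpha> k1 k2 (Xg p d e)) < 0) (at_right 0)"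
          using True by (auto dest: order_tendstoD(2))
        then show ?thesis by eventually_elim (simp add: hv_Yg)
      qed simp
    qed
    from eventually_ball_finite[OF _ this] show "eventually (\<lambda>del. \<forall>i\<in>{..d}.
      hv (fst f) (fst (snd f)) (snd (snd f)) (Xg p d e) < 0 \<longrightarrow>
      hv (fst f) (fst (snd f)) (snd (snd f)) (Yg p d e del i) < 0) (at_right 0)" by (simp add: f)
  qed
  have "eventually (\<lambda>del. 0 < del \<and> del < 1 \<and> (\<forall>f\<in>F. \<forall>i\<in>{..d}.
      hv (fst f) (fst (snd f)) (snd (snd f)) (Xg p d e) < 0 \<longrightarrow>
      hv (fst f) (fst (snd f)) (snd (snd f)) (Yg p d e del i) < 0)) (at_right (0::real))"
  proof -
    have lt1: "eventually (\<lambda>del. del < 1) (at_right (0::real))"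
      unfolding eventually_at_right_field by (intro exI[of _ 1]) auto
    show ?thesis using eventually_at_right_less[of "0::real"] lt1 eventually_ball_finite[OF fF ev3]
      by eventually_elim blast
  qed
  then obtain del where del: "0 < del" "del < 1" "\<forall>f\<in>F. \<forall>i\<in>{..d}.
      hv (fst f) (fst (snd f)) (snd (snd f)) (Xg p d e) < 0 \<longrightarrow>
      hv (fst f) (fst (snd f)) (snd (snd f)) (Yg p d e del i) < 0"
    using eventually_happens'[OF nb] by blast
  show ?thesis
  proof (intro exI conjI)
    show "0 < e" "(\<Sum>i\<in>{1..d}. e ^ i) \<le> 1" "0 < del" "del \<le> 1" using e del by auto
    show "\<forall>(\<alpha>,k1,k2)\<in>F.
         (hv \<alpha> k1 k2 (Xg p d e) = 0 \<longrightarrow> (\<forall>i\<le>d. hv \<alpha> k1 k2 (Yg p d e del i) = 0)) \<and>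
         (hv \<alpha> k1 k2 (Xg p d e) < 0 \<longrightarrow> (\<forall>i\<le>d. hv \<alpha> k1 k2 (Yg p d e del i) < 0))"
    proof (intro ballI, clarify, intro conjI impI allI)
      fix \<alpha> k1 k2 i assume f: "(\<alpha>, k1, k2) \<in> F" and i: "i \<le> d"
      { assume h0: "hv \<alpha> k1 k2 (Xg p d e) = 0"
        then have "\<forall>l\<le>d. hv \<alpha> k1 k2 (p l) = 0" using bspec[OF e(3) f] h0 by simp
        then show "hv \<alpha> k1 k2 (Yg p d e del i) = 0" using h0 i by (simp add: hv_Yg) }
      { assume "hv \<alpha> k1 k2 (Xg p d e) < 0"
        then show "hv \<alpha> k1 k2 (Yg p d e del i) < 0" using bspec[OF del(3) f] i by simp }
    qed
  qed
qed




lemma polyhedron_vanish: "polyhedron_on T P \<Longrightarrow> u \<in> P \<Longrightarrow> k \<notin> T \<Longrightarrow> u k = 0"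
  unfolding polyhedron_on_def by auto

lemma polyhedron_comb:
  assumes P: "polyhedron_on T P" and pl: "\<forall>l\<le>d. p l \<in> P"
    and mu: "\<forall>l\<le>d. 0 \<le> mu l" "(\<Sum>l\<le>d. mu l) = 1"
  shows "(\<lambda>k. \<Sum>l\<le>d. mu l * p l k) \<in> P"
proof -
  obtain C where fC: "finite C" and PC: "P = {u. (\<forall>k. k \<notin> T \<longrightarrow> u k = 0) \<and> (\<forall>(c, b)\<in>C. (\<Sum>k\<in>T. c k * u k) \<le> b)}"
    using P unfolding polyhedron_on_def by blast
  have van: "\<forall>l\<le>d. \<forall>k. k \<notin> T \<longrightarrow> p l k = 0" and cons: "\<forall>l\<le>d. \<forall>(c, b)\<in>C. (\<Sum>k\<in>T. c k * p l k) \<le> b"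
    using pl unfolding PC by auto
  show ?thesis unfolding PC
  proof (intro CollectI conjI allI impI ballI)
    fix k assume "k \<notin> T" then show "(\<Sum>l\<le>d. mu l * p l k) = 0" using van by simp
  next
    fix cb assume cb: "cb \<in> C"
    obtain c b where cbe: "cb = (c, b)" by (cases cb)
    have "(\<Sum>k\<in>T. c k * (\<Sum>l\<le>d. mu l * p l k)) = (\<Sum>l\<le>d. mu l * (\<Sum>k\<in>T. c k * p l k))"
      by (simp add: sum_distrib_left sum.swap[of _ T] algebra_simps)
    also have "\<dots> \<le> (\<Sum>l\<le>d. mu l * b)"
      using cons cb cbe mu by (intro sum_mono mult_left_mono) auto
    also have "\<dots> = b" using mu by (simp add: sum_distrib_right[symmetric])
    finally show "case cb of (c, b) \<Rightarrow> (\<Sum>k\<in>T. c k * (\<Sum>l\<le>d. mu l * p l k)) \<le> b"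
      using cbe by simp
  qed
qed

lemma polyhedron_seg:
  assumes P: "polyhedron_on T P" and u: "u \<in> P" and w: "w \<in> P" and del: "0 \<le> del" "del \<le> 1"
  shows "(\<lambda>k. u k + del * (w k - u k)) \<in> P"
proof -
  define p where "p l = (if l = 0 then u else w)" for l :: nat
  define mu where "mu l = (if l = 0 then 1 - del else del)" for l :: nat
  have "(\<lambda>k. \<Sum>l\<le>1. mu l * p l k) \<in> P"
    by (rule polyhedron_comb[OF P]) (use u w del in \<open>auto simp: p_def mu_def\<close>)
  moreover have "(\<lambda>k. \<Sum>l\<le>1. mu l * p l k) = (\<lambda>k. u k + del * (w k - u k))"
    by (simp add: p_def mu_def algebra_simps)
  ultimately show ?thesis by simp
qed

lemma Xg_in:
  assumes P: "polyhedron_on T P" and pl: "\<forall>l\<le>d. p l \<in> P" and e: "0 \<le> e" "(\<Sum>i\<in>{1..d}. e ^ i) \<le> 1"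
  shows "Xg p d e \<in> P"
proof -
  define mu where "mu l = (if l = 0 then 1 - (\<Sum>i\<in>{1..d}. e ^ i) else e ^ l)" for l :: nat
  have D: "{..d} = insert 0 {1..d}" by auto
  have s0: "(\<Sum>l\<in>{1..d}. mu l) = (\<Sum>i\<in>{1..d}. e ^ i)" by (rule sum.cong) (auto simp: mu_def)
  have s0': "(\<Sum>l\<in>{1..d}. mu l * p l k) = (\<Sum>i\<in>{1..d}. e ^ i * p i k)" for k
    by (rule sum.cong) (auto simp: mu_def)
  have s1: "(\<Sum>l\<le>d. mu l) = 1"
    unfolding D using s0 by (simp add: mu_def)
  have "(\<lambda>k. \<Sum>l\<le>d. mu l * p l k) \<in> P"
    by (rule polyhedron_comb[OF P pl]) (use e s1 in \<open>auto simp: mu_def\<close>)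
  moreover have "(\<lambda>k. \<Sum>l\<le>d. mu l * p l k) = Xg p d e"
  proof
    fix k
    have "(\<Sum>l\<le>d. mu l * p l k) = mu 0 * p 0 k + (\<Sum>l\<in>{1..d}. e ^ l * p l k)"
      unfolding D using s0' by simp
    also have "\<dots> = Xg p d e k"
      by (simp add: Xg_def mu_def algebra_simps sum_subtractf sum_distrib_right sum_distrib_left)
    finally show "(\<Sum>l\<le>d. mu l * p l k) = Xg p d e k" .
  qed
  ultimately show ?thesis by simp
qed

lemma Yg_in:
  assumes P: "polyhedron_on T P" and pl: "\<forall>l\<le>d. p l \<in> P" and e: "0 \<le> e" "(\<Sum>i\<in>{1..d}. e ^ i) \<le> 1"
    and del: "0 \<le> del" "del \<le> 1" and i: "i \<le> d"
  shows "Yg p d e del i \<in> P"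
  unfolding Yg_def by (rule polyhedron_seg[OF P Xg_in[OF P pl e]]) (use pl i del in auto)

lemma Yg_indep:
  assumes ai: "aff_indep_on T p d" and del: "del \<noteq> 0"
  shows "aff_indep_on T (Yg p d e del) d"
  unfolding aff_indep_on_def
proof (intro allI impI)
  fix c assume h: "\<forall>k\<in>T. (\<Sum>i\<in>{1..d}. c i * (Yg p d e del i k - Yg p d e del 0 k)) = 0"
  have "\<forall>k\<in>T. (\<Sum>i\<in>{1..d}. (del * c i) * (p i k - p 0 k)) = 0"
  proof
    fix k assume k: "k \<in> T"
    have "(\<Sum>i\<in>{1..d}. (del * c i) * (p i k - p 0 k)) = (\<Sum>i\<in>{1..d}. c i * (Yg p d e del i k - Yg p d e del 0 k))"
      by (rule sum.cong) (auto simp: Yg_def algebra_simps)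
    then show "(\<Sum>i\<in>{1..d}. (del * c i) * (p i k - p 0 k)) = 0" using h k by simp
  qed
  from spec[OF ai[unfolded aff_indep_on_def], of "\<lambda>i. del * c i"] this
  have "\<forall>i\<in>{1..d}. del * c i = 0" by simp
  with del show "\<forall>i\<in>{1..d}. c i = 0" by simp
qed

lemma span_reindex:
  assumes "z \<in> fv.span B"
  shows "(\<lambda>k. if P k then z (g k) else 0) \<in> fv.span ((\<lambda>f k. if P k then f (g k) else 0) ` B)"
proof -
  obtain t r where t: "finite t" "t \<subseteq> B" and z: "z = (\<Sum>a\<in>t. (\<lambda>k. r a * a k))"
    using assms unfolding fv.span_explicit by blast
  have "(\<lambda>k. if P k then z (g k) else 0) = (\<Sum>a\<in>t. (\<lambda>k. r a * (\<lambda>f k. if P k then f (g k) else 0) a k))"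
    unfolding z by (auto simp: fun_eq_iff sum_fun_apply)
  also have "\<dots> \<in> fv.span ((\<lambda>f k. if P k then f (g k) else 0) ` B)"
    using t by (intro fv.span_sum fv.span_scale fv.span_base) auto
  finally show ?thesis .
qed

lemma affdim_from_indep:
  assumes fT: "finite T" and z0: "z0 \<in> Q" and fB: "finite B" and iB: "fv.independent B"
    and zb: "\<forall>b\<in>B. (\<lambda>k. z0 k + b k) \<in> Q" and vB: "\<forall>b\<in>B. \<forall>k. k \<notin> T \<longrightarrow> b k = 0"
  shows "int (card B) \<le> affdim_on T Q"
proof -
  obtain g where g: "bij_betw g {1..card B} B" using ex_bij_betw_nat_finite_1[OF fB] by blast
  define p where "p l = (if l = 0 then z0 else (\<lambda>k. z0 k + g l k))" for l
  have "\<forall>i\<le>card B. p i \<in> Q"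
    using z0 zb g by (auto simp: p_def bij_betw_def)
  moreover have "aff_indep_on T p (card B)"
    unfolding aff_indep_on_def
  proof (intro allI impI)
    fix c assume h: "\<forall>k\<in>T. (\<Sum>i\<in>{1..card B}. c i * (p i k - p 0 k)) = 0"
    have zero: "(\<Sum>i\<in>{1..card B}. (\<lambda>k. c i * g i k)) = 0"
    proof
      fix k
      show "(\<Sum>i\<in>{1..card B}. (\<lambda>k. c i * g i k)) k = 0 k"
      proof (cases "k \<in> T")
        case True
        have "(\<Sum>i\<in>{1..card B}. c i * g i k) = (\<Sum>i\<in>{1..card B}. c i * (p i k - p 0 k))"
          by (rule sum.cong) (auto simp: p_def)
        then show ?thesis using h True by (simp add: sum_fun_apply)
      next
        case False
        have "\<forall>i\<in>{1..card B}. g i k = 0" using vB g False by (auto simp: bij_betw_def)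
        then show ?thesis by (simp add: sum_fun_apply)
      qed
    qed
    define f where "f b = c (the_inv_into {1..card B} g b)" for b
    have inj: "inj_on g {1..card B}" using g by (simp add: bij_betw_def)
    have tinv: "the_inv_into {1..card B} g (g i) = i" if "i \<in> {1..card B}" for i
      using the_inv_into_f_f[OF inj that] .
    have "(\<Sum>b\<in>B. (\<lambda>k. f b * b k)) = (\<Sum>i\<in>{1..card B}. (\<lambda>k. f (g i) * g i k))"
      using sum.reindex[OF inj, of "\<lambda>b. (\<lambda>k. f b * b k)"] g by (simp add: bij_betw_def o_def)
    also have "\<dots> = (\<Sum>i\<in>{1..card B}. (\<lambda>k. c i * g i k))"
      by (rule sum.cong) (use tinv in \<open>auto simp: f_def\<close>)
    finally have "(\<Sum>b\<in>B. (\<lambda>k. f b * b k)) = 0" using zero by simp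
    then have "\<forall>b\<in>B. f b = 0" using iB fB unfolding fv.independent_explicit_finite_subsets by blast
    then show "\<forall>i\<in>{1..card B}. c i = 0"
    proof (intro ballI)
      fix i assume fb: "\<forall>b\<in>B. f b = 0" and i: "i \<in> {1..card B}"
      have "g i \<in> B" using g i by (auto simp: bij_betw_def)
      then have "f (g i) = 0" using fb by blast
      then show "c i = 0" using tinv[OF i] by (simp add: f_def)
    qed
  qed
  ultimately show ?thesis by (rule affdim_ge[OF fT])
qed




lemma dimU_nonneg:
  assumes m2: "m \<ge> 2"
    and distinct_exps: "\<forall>j<m. \<forall>j'<m. j \<noteq> j' \<longrightarrow> (\<exists>i<n. t j i \<noteq> t j' i)"
  shows "0 \<le> dimU n m a t q"
proof -
  obtain u where u: "u \<in> U_set n m a t q" using U_nonempty[OF m2 distinct_exps] by blast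
  then have "\<forall>k. k \<notin> grid n q \<longrightarrow> u k = 0" by (simp add: U_set_def)
  then show ?thesis unfolding dimU_def using pdim_nonneg[OF finite_grid u] by blast
qed

lemma subgrid_memD:
  assumes "k \<in> subgrid n v q"
  shows "(\<lambda>i. k i - v i) \<in> grid n q" "(\<lambda>i. v i + (k i - v i)) = k"
  using assms by (auto simp: subgrid_def)

lemma subgrid_memI:
  assumes "\<kappa> \<in> grid n q"
  shows "(\<lambda>i. v i + \<kappa> i) \<in> subgrid n v q"
  using assms by (auto simp: subgrid_def)

lemma shift_lift:
  assumes v0: "\<forall>i\<ge>n. v i = 0" and sub: "subgrid n v q \<subseteq> grid n N"
    and adm: "admissible_shift n m t q \<sigma>"
  shows "shifted n t j (\<lambda>i. \<sigma> i + v i) = (\<lambda>i. v i + shifted n t j \<sigma> i)"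
    and "admissible_shift n m t N (\<lambda>i. \<sigma> i + v i)"
proof -
  show sh: "shifted n t j (\<lambda>i. \<sigma> i + v i) = (\<lambda>i. v i + shifted n t j \<sigma> i)" for j
    using v0 by (auto simp: shifted_def fun_eq_iff)
  show "admissible_shift n m t N (\<lambda>i. \<sigma> i + v i)"
    unfolding admissible_shift_def
  proof (intro conjI allI impI)
    fix i assume "n \<le> i" then show "\<sigma> i + v i = 0" using v0 adm by (simp add: admissible_shift_def)
  next
    fix j assume "j < m"
    then have "shifted n t j \<sigma> \<in> grid n q" using adm by (simp add: admissible_shift_def)
    then show "shifted n t j (\<lambda>i. \<sigma> i + v i) \<in> grid n N"
      unfolding sh using sub subgrid_memI by blast
  qed
qed

lemma ball_img: "(\<forall>x\<in>f ` A. P x) \<longleftrightarrow> (\<forall>y\<in>A. P (f y))" by auto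

lemma sum_ind_diff:
  assumes "finite T" "k1 \<in> T" "k2 \<in> T"
  shows "(\<Sum>k\<in>T. (ind k1 k - ind k2 k) * w k) = w k1 - w k2"
  using sum_ind_mult[OF assms(1,2), of w] sum_ind_mult[OF assms(1,3), of w]
  by (simp add: left_diff_distrib sum_subtractf)

lemma part1:
  fixes n m :: nat and a :: "nat \<Rightarrow> real" and t :: "nat \<Rightarrow> nat \<Rightarrow> int"
    and R :: nat and v :: "nat \<Rightarrow> nat \<Rightarrow> int" and q :: "nat \<Rightarrow> nat"
  assumes m2: "m \<ge> 2"
    and distinct_exps: "\<forall>j<m. \<forall>j'<m. j \<noteq> j' \<longrightarrow> (\<exists>i<n. t j i \<noteq> t j' i)"
    and sub: "\<forall>r<R. q r \<ge> 1 \<and> (\<forall>i\<ge>n. v r i = 0) \<and> subgrid n (v r) (q r) \<subseteq> grid n N"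
    and disj: "\<forall>r<R. \<forall>r'<R. r \<noteq> r' \<longrightarrow> subgrid n (v r) (q r) \<inter> subgrid n (v r') (q r') = {}"
    and cov: "(\<Union>r<R. subgrid n (v r) (q r)) = grid n N"
  shows "dimU n m a t N \<le> (\<Sum>r<R. dimU n m a t (q r))"
proof -
  define T where "T = grid n N"
  have fT: "finite T" by (simp add: T_def finite_grid)
  define X where "X = (\<Sum>r<R. dimU n m a t (q r))"
  have X0: "0 \<le> X" unfolding X_def by (intro sum_nonneg dimU_nonneg[OF m2 distinct_exps])
  have "pdim_on T (U_set n m a t N) \<le> X"
  proof (rule pdim_le[OF fT])
    fix P assume P: "polyhedron_on T P" "P \<subseteq> U_set n m a t N"
    show "affdim_on T P \<le> X"
    proof (cases "P = {}")
      case True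
      then show ?thesis using X0 by (simp add: affdim_on_def)
    next
      case False
      obtain d p where dp: "affdim_on T P = int d" "\<forall>i\<le>d. p i \<in> P" "aff_indep_on T p d"
        using affdim_ex[OF fT False] by blast
      define F where "F = (\<lambda>(j,j',k1,k2). (a j - a j', k1, k2)) ` ({..<m} \<times> {..<m} \<times> T \<times> T)"
      have fF: "finite F" unfolding F_def using fT by simp
      obtain e del where ed: "0 < e" "(\<Sum>i\<in>{1..d}. e ^ i) \<le> 1" "0 < del" "del \<le> 1"
        and gen: "\<forall>(\<alpha>,k1,k2)\<in>F.
         (hv \<alpha> k1 k2 (Xg p d e) = 0 \<longrightarrow> (\<forall>i\<le>d. hv \<alpha> k1 k2 (Yg p d e del i) = 0)) \<and>
         (hv \<alpha> k1 k2 (Xg p d e) < 0 \<longrightarrow> (\<forall>i\<le>d. hv \<alpha> k1 k2 (Yg p d e del i) < 0))"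
        using generic_choice[OF fF, where p=p and d=d] by blast
      define x where "x = Xg p d e"
      define y where "y = Yg p d e del"
      have xP: "x \<in> P" unfolding x_def by (rule Xg_in[OF P(1) dp(2)]) (use ed in auto)
      have yP: "\<forall>i\<le>d. y i \<in> P" unfolding y_def using Yg_in[OF P(1) dp(2)] ed by auto
      have yai: "aff_indep_on T y d" unfolding y_def by (rule Yg_indep[OF dp(3)]) (use ed in auto)
      have xU: "x \<in> U_set n m a t N" using P(2) xP by blast
      have exJ: "\<forall>S. \<exists>jj. admissible_shift n m t N S \<longrightarrow> (fst jj < m \<and> snd jj < m \<and> fst jj \<noteq> snd jj \<and>
          a (fst jj) + x (shifted n t (fst jj) S) = a (snd jj) + x (shifted n t (snd jj) S) \<and>
          (\<forall>j<m. a (fst jj) + x (shifted n t (fst jj) S) \<le> a j + x (shifted n t j S)))"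
      proof
        fix S
        show "\<exists>jj. admissible_shift n m t N S \<longrightarrow> (fst jj < m \<and> snd jj < m \<and> fst jj \<noteq> snd jj \<and>
          a (fst jj) + x (shifted n t (fst jj) S) = a (snd jj) + x (shifted n t (snd jj) S) \<and>
          (\<forall>j<m. a (fst jj) + x (shifted n t (fst jj) S) \<le> a j + x (shifted n t j S)))"
        proof (cases "admissible_shift n m t N S")
          case True
          then have "sat_linearization n m a t S x" using xU by (simp add: U_set_def)
          then obtain j1 j2 where "j1 < m" "j2 < m" "j1 \<noteq> j2"
            "a j1 + x (shifted n t j1 S) = a j2 + x (shifted n t j2 S)"
            "\<forall>j<m. a j1 + x (shifted n t j1 S) \<le> a j + x (shifted n t j S)"
            unfolding sat_linearization_def by blast
          then show ?thesis by (intro exI[of _ "(j1, j2)"]) simp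
        qed simp
      qed
      obtain JJ where JJ: "\<forall>S. admissible_shift n m t N S \<longrightarrow> (fst (JJ S) < m \<and> snd (JJ S) < m \<and> fst (JJ S) \<noteq> snd (JJ S) \<and>
          a (fst (JJ S)) + x (shifted n t (fst (JJ S)) S) = a (snd (JJ S)) + x (shifted n t (snd (JJ S)) S) \<and>
          (\<forall>j<m. a (fst (JJ S)) + x (shifted n t (fst (JJ S)) S) \<le> a j + x (shifted n t j S)))"
        using choice[OF exJ] by blast
      define J1 where "J1 S = fst (JJ S)" for S
      define J2 where "J2 S = snd (JJ S)" for S
      have J: "J1 S < m" "J2 S < m" "J1 S \<noteq> J2 S"
          "a (J1 S) + x (shifted n t (J1 S) S) = a (J2 S) + x (shifted n t (J2 S) S)"
          "\<forall>j<m. a (J1 S) + x (shifted n t (J1 S) S) \<le> a j + x (shifted n t j S)"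
        if "admissible_shift n m t N S" for S
        using JJ that unfolding J1_def J2_def by blast+
      have hvphi: "hv (a j1 - a j2) k1 k2 u = (a j1 + u k1) - (a j2 + u k2)" for j1 j2 k1 k2 u
        by (simp add: hv_def)
      have cell: "a (J1 S) + y i (shifted n t (J1 S) S) = a (J2 S) + y i (shifted n t (J2 S) S) \<and>
          (\<forall>j<m. a (J1 S) + y i (shifted n t (J1 S) S) \<le> a j + y i (shifted n t j S))"
        if S: "admissible_shift n m t N S" and i: "i \<le> d" for S i
      proof -
        have sh: "shifted n t j S \<in> T" if "j < m" for j using S that by (simp add: admissible_shift_def T_def)
        have inF: "(a j1 - a j2, shifted n t j1 S, shifted n t j2 S) \<in> F" if "j1 < m" "j2 < m" for j1 j2
          unfolding F_def using that sh by (auto intro!: image_eqI[of _ _ "(j1, j2, shifted n t j1 S, shifted n t j2 S)"])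
        have g0: "hv (a j1 - a j2) (shifted n t j1 S) (shifted n t j2 S) x = 0 \<Longrightarrow>
                  hv (a j1 - a j2) (shifted n t j1 S) (shifted n t j2 S) (y i) = 0"
          and g1: "hv (a j1 - a j2) (shifted n t j1 S) (shifted n t j2 S) x < 0 \<Longrightarrow>
                  hv (a j1 - a j2) (shifted n t j1 S) (shifted n t j2 S) (y i) < 0"
          if "j1 < m" "j2 < m" for j1 j2
          using bspec[OF gen inF[OF that]] i unfolding x_def y_def by auto
        have eq: "a (J1 S) + y i (shifted n t (J1 S) S) = a (J2 S) + y i (shifted n t (J2 S) S)"
          using g0[OF J(1,2)[OF S]] J(4)[OF S] by (simp add: hvphi)
        have le: "a (J1 S) + y i (shifted n t (J1 S) S) \<le> a j + y i (shifted n t j S)" if j: "j < m" for j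
        proof (cases "a (J1 S) + x (shifted n t (J1 S) S) = a j + x (shifted n t j S)")
          case True
          then show ?thesis using g0[OF J(1)[OF S] j] by (simp add: hvphi)
        next
          case False
          then have "a (J1 S) + x (shifted n t (J1 S) S) < a j + x (shifted n t j S)"
            using J(5)[OF S] j by force
          then show ?thesis using g1[OF J(1)[OF S] j] by (simp add: hvphi)
        qed
        show ?thesis using eq le by blast
      qed
      define tau where "tau = (\<lambda>r u k. if k \<in> grid n (q r) then u (\<lambda>i. v r i + k i) else (0::real))"
      define iota where "iota = (\<lambda>r z k. if k \<in> subgrid n (v r) (q r) then z (\<lambda>i. k i - v r i) else (0::real))"
      define Sr where "Sr r \<sigma> = (\<lambda>i. \<sigma> i + v r i)" for r and \<sigma> :: "nat \<Rightarrow> int"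
      define Ad where "Ad r = {\<sigma>. admissible_shift n m t (q r) \<sigma>}" for r
      define C where "C r = (\<lambda>(\<sigma>,j). (\<lambda>k. ind (shifted n t (J1 (Sr r \<sigma>)) \<sigma>) k - ind (shifted n t j \<sigma>) k,
               a j - a (J1 (Sr r \<sigma>)))) ` (Ad r \<times> {..<m}) \<union>
           (\<lambda>\<sigma>. (\<lambda>k. ind (shifted n t (J2 (Sr r \<sigma>)) \<sigma>) k - ind (shifted n t (J1 (Sr r \<sigma>)) \<sigma>) k,
               a (J1 (Sr r \<sigma>)) - a (J2 (Sr r \<sigma>)))) ` Ad r" for r
      define Q where "Q r = {w. (\<forall>k. k \<notin> grid n (q r) \<longrightarrow> w k = 0) \<and>
           (\<forall>(c,b)\<in>C r. (\<Sum>k\<in>grid n (q r). c k * w k) \<le> b)}" for r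
      have m0: "0 < m" using m2 by simp
      have fAd: "finite (Ad r)" for r unfolding Ad_def by (rule finite_adm[OF m0])
      have Qpoly: "polyhedron_on (grid n (q r)) (Q r)" for r
        unfolding polyhedron_on_def Q_def using fAd[of r] by (intro exI[of _ "C r"]) (auto simp: C_def)
      have lift: "admissible_shift n m t N (Sr r \<sigma>)"
          "\<And>j. shifted n t j (Sr r \<sigma>) = (\<lambda>i. v r i + shifted n t j \<sigma> i)"
        if r: "r < R" and \<sigma>: "\<sigma> \<in> Ad r" for r \<sigma>
        using shift_lift[of n "v r" "q r" N m t \<sigma>] sub r \<sigma> unfolding Sr_def Ad_def by auto
      have shq: "shifted n t j \<sigma> \<in> grid n (q r)" if "\<sigma> \<in> Ad r" "j < m" for r \<sigma> j
        using that by (simp add: Ad_def admissible_shift_def)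
      have Qcons: "w \<in> Q r \<longleftrightarrow> (\<forall>k. k \<notin> grid n (q r) \<longrightarrow> w k = 0) \<and>
            (\<forall>\<sigma>\<in>Ad r. (\<forall>j<m. w (shifted n t (J1 (Sr r \<sigma>)) \<sigma>) - w (shifted n t j \<sigma>) \<le> a j - a (J1 (Sr r \<sigma>))) \<and>
               w (shifted n t (J2 (Sr r \<sigma>)) \<sigma>) - w (shifted n t (J1 (Sr r \<sigma>)) \<sigma>) \<le> a (J1 (Sr r \<sigma>)) - a (J2 (Sr r \<sigma>)))"
        if r: "r < R" for r w
      proof -
        have J12: "J1 (Sr r \<sigma>) < m" "J2 (Sr r \<sigma>) < m" if "\<sigma> \<in> Ad r" for \<sigma>
          using J(1,2)[OF lift(1)[OF r that]] by auto
        show ?thesis unfolding Q_def C_def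
          using J12 shq
          by (simp add: ball_Un ball_img split_paired_Ball_Sigma sum_ind_diff[OF finite_grid] cong: conj_cong) blast
      qed
      have Qsub: "Q r \<subseteq> U_set n m a t (q r)" if r: "r < R" for r
      proof
        fix w assume w: "w \<in> Q r"
        note wc = w[unfolded Qcons[OF r]]
        show "w \<in> U_set n m a t (q r)"
          unfolding U_set_def
        proof (intro CollectI conjI allI impI)
          fix k assume "k \<notin> grid n (q r)" then show "w k = 0" using wc by blast
        next
          fix \<sigma> assume "admissible_shift n m t (q r) \<sigma>"
          then have \<sigma>: "\<sigma> \<in> Ad r" by (simp add: Ad_def)
          note JS = J[OF lift(1)[OF r \<sigma>]]
          have c1: "\<forall>j<m. a (J1 (Sr r \<sigma>)) + w (shifted n t (J1 (Sr r \<sigma>)) \<sigma>) \<le> a j + w (shifted n t j \<sigma>)"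
            using wc \<sigma> by force
          have c2: "a (J2 (Sr r \<sigma>)) + w (shifted n t (J2 (Sr r \<sigma>)) \<sigma>) \<le> a (J1 (Sr r \<sigma>)) + w (shifted n t (J1 (Sr r \<sigma>)) \<sigma>)"
            using wc \<sigma> by force
          have eqc: "a (J1 (Sr r \<sigma>)) + w (shifted n t (J1 (Sr r \<sigma>)) \<sigma>) = a (J2 (Sr r \<sigma>)) + w (shifted n t (J2 (Sr r \<sigma>)) \<sigma>)"
            using c1 c2 JS(2) by force
          show "sat_linearization n m a t \<sigma> w"
            unfolding sat_linearization_def using JS(1,2,3) eqc c1 by blast
        qed
      qed
      have tauQ: "tau r (y i) \<in> Q r" if r: "r < R" and i: "i \<le> d" for r i
      proof -
        have A: "\<forall>k. k \<notin> grid n (q r) \<longrightarrow> tau r (y i) k = 0" by (simp add: tau_def)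
        have B: "\<forall>\<sigma>\<in>Ad r. (\<forall>j<m. tau r (y i) (shifted n t (J1 (Sr r \<sigma>)) \<sigma>) - tau r (y i) (shifted n t j \<sigma>) \<le> a j - a (J1 (Sr r \<sigma>))) \<and>
             tau r (y i) (shifted n t (J2 (Sr r \<sigma>)) \<sigma>) - tau r (y i) (shifted n t (J1 (Sr r \<sigma>)) \<sigma>) \<le> a (J1 (Sr r \<sigma>)) - a (J2 (Sr r \<sigma>))"
        proof
          fix \<sigma> assume \<sigma>: "\<sigma> \<in> Ad r"
          have tv: "tau r (y i) (shifted n t j \<sigma>) = y i (shifted n t j (Sr r \<sigma>))" if j: "j < m" for j
            using shq[OF \<sigma> j] lift(2)[OF r \<sigma>] by (simp add: tau_def)
          note JS = J[OF lift(1)[OF r \<sigma>]]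
          note cl = cell[OF lift(1)[OF r \<sigma>] i]
          show "(\<forall>j<m. tau r (y i) (shifted n t (J1 (Sr r \<sigma>)) \<sigma>) - tau r (y i) (shifted n t j \<sigma>) \<le> a j - a (J1 (Sr r \<sigma>))) \<and>
             tau r (y i) (shifted n t (J2 (Sr r \<sigma>)) \<sigma>) - tau r (y i) (shifted n t (J1 (Sr r \<sigma>)) \<sigma>) \<le> a (J1 (Sr r \<sigma>)) - a (J2 (Sr r \<sigma>))"
            using cl JS by (auto simp: tv)
        qed
        show ?thesis unfolding Qcons[OF r] using A B by blast
      qed
      define w where "w = (\<lambda>i k. if k \<in> T then y i k - y 0 k else 0)"
      have winj: "inj_on w {1..d}" and wind: "fv.independent (w ` {1..d})"
        using aff_indep_W[OF yai fT] unfolding w_def by auto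
      define W where "W = w ` {1..d}"
      have exB: "\<forall>r. \<exists>B. B \<subseteq> tau r ` W \<and> fv.independent B \<and> tau r ` W \<subseteq> fv.span B"
      proof
        fix r
        obtain B where "B \<subseteq> tau r ` W" "fv.independent B" "tau r ` W \<subseteq> fv.span B"
          by (rule fv.maximal_independent_subset)
        then show "\<exists>B. B \<subseteq> tau r ` W \<and> fv.independent B \<and> tau r ` W \<subseteq> fv.span B" by blast
      qed
      obtain B where B: "\<forall>r. B r \<subseteq> tau r ` W \<and> fv.independent (B r) \<and> tau r ` W \<subseteq> fv.span (B r)"
        using choice[OF exB] by blast
      have finB: "finite (B r)" for r
      proof (rule finite_subset)
        show "B r \<subseteq> tau r ` W" using B by blast
        show "finite (tau r ` W)" unfolding W_def by simp
      qed
      have decomp: "z = (\<Sum>r<R. iota r (tau r z))" if z: "z \<in> W" for z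
      proof
        fix k
        have zv: "\<forall>k. k \<notin> T \<longrightarrow> z k = 0" using z by (auto simp: W_def w_def)
        show "z k = (\<Sum>r<R. iota r (tau r z)) k"
        proof (cases "k \<in> T")
          case True
          then obtain r0 where r0: "r0 < R" "k \<in> subgrid n (v r0) (q r0)" using cov unfolding T_def by auto
          have others: "iota r (tau r z) k = 0" if "r \<in> {..<R} - {r0}" for r
          proof -
            have "k \<notin> subgrid n (v r) (q r)" using disj that r0 by blast
            then show ?thesis by (simp add: iota_def)
          qed
          have "(\<Sum>r<R. iota r (tau r z)) k = (\<Sum>r\<in>{..<R}. iota r (tau r z) k)" by (simp add: sum_fun_apply)
          also have "\<dots> = iota r0 (tau r0 z) k + (\<Sum>r\<in>{..<R}-{r0}. iota r (tau r z) k)"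
            by (rule sum.remove) (use r0 in auto)
          also have "(\<Sum>r\<in>{..<R}-{r0}. iota r (tau r z) k) = 0" by (rule sum.neutral) (use others in auto)
          also have "iota r0 (tau r0 z) k = z k"
            using subgrid_memD[OF r0(2)] r0(2) by (simp add: iota_def tau_def)
          finally show ?thesis by simp
        next
          case False
          then have "k \<notin> subgrid n (v r) (q r)" if "r < R" for r using sub that unfolding T_def by auto
          then show ?thesis using zv False by (simp add: sum_fun_apply iota_def)
        qed
      qed
      have Wspan: "W \<subseteq> fv.span (\<Union>r<R. iota r ` B r)"
      proof
        fix z assume z: "z \<in> W"
        have "(\<Sum>r<R. iota r (tau r z)) \<in> fv.span (\<Union>r<R. iota r ` B r)"
        proof (rule fv.span_sum)
          fix r assume r: "r \<in> {..<R}"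
          have tz: "tau r z \<in> fv.span (B r)" using B z by blast
          have "iota r (tau r z) \<in> fv.span (iota r ` B r)"
            unfolding iota_def using span_reindex[OF tz, where P="\<lambda>k. k \<in> subgrid n (v r) (q r)" and g="\<lambda>k i. k i - v r i"] by simp
          also have "\<dots> \<subseteq> fv.span (\<Union>r<R. iota r ` B r)" by (rule fv.span_mono) (use r in auto)
          finally show "iota r (tau r z) \<in> fv.span (\<Union>r<R. iota r ` B r)" .
        qed
        then show "z \<in> fv.span (\<Union>r<R. iota r ` B r)" using decomp[OF z] by simp
      qed
      have finU: "finite (\<Union>r<R. iota r ` B r)" using finB by simp
      have "d = card W" using card_image[OF winj] W_def by simp
      also have "\<dots> \<le> card (\<Union>r<R. iota r ` B r)"
        using fv.independent_span_bound[OF finU wind[folded W_def] Wspan] by simp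
      also have "\<dots> \<le> (\<Sum>r<R. card (iota r ` B r))" by (rule card_UN_le) simp
      also have "\<dots> \<le> (\<Sum>r<R. card (B r))" by (intro sum_mono card_image_le finB)
      finally have dle: "d \<le> (\<Sum>r<R. card (B r))" .
      have Bb: "int (card (B r)) \<le> dimU n m a t (q r)" if r: "r < R" for r
      proof -
        have z0: "tau r (y 0) \<in> Q r" using tauQ[OF r] by simp
        have zb: "\<forall>b\<in>B r. (\<lambda>k. tau r (y 0) k + b k) \<in> Q r"
        proof
          fix b assume "b \<in> B r"
          then obtain i where i: "i \<in> {1..d}" "b = tau r (w i)" using B unfolding W_def by blast
          have "(\<lambda>k. tau r (y 0) k + b k) = tau r (y i)"
          proof
            fix k show "tau r (y 0) k + b k = tau r (y i) k"
            proof (cases "k \<in> grid n (q r)")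
              case True
              then have "(\<lambda>l. v r l + k l) \<in> T" using subgrid_memI sub r unfolding T_def by blast
              then show ?thesis using True i by (simp add: tau_def w_def)
            qed (simp add: tau_def i)
          qed
          then show "(\<lambda>k. tau r (y 0) k + b k) \<in> Q r" using tauQ[OF r] i by simp
        qed
        have vB: "\<forall>b\<in>B r. \<forall>k. k \<notin> grid n (q r) \<longrightarrow> b k = 0"
        proof (intro ballI allI impI)
          fix b k assume "b \<in> B r" "k \<notin> grid n (q r)"
          moreover obtain z where "b = tau r z" using B \<open>b \<in> B r\<close> by blast
          ultimately show "b k = 0" by (simp add: tau_def)
        qed
        have "int (card (B r)) \<le> affdim_on (grid n (q r)) (Q r)"
          by (rule affdim_from_indep[OF finite_grid z0 finB _ zb vB]) (use B in blast)
        also have "\<dots> \<le> pdim_on (grid n (q r)) (U_set n m a t (q r))"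
          by (rule pdim_ge[OF finite_grid Qpoly Qsub[OF r]])
        finally show ?thesis by (simp add: dimU_def)
      qed
      have "affdim_on T P = int d" by (rule dp(1))
      also have "\<dots> \<le> int (\<Sum>r<R. card (B r))" using dle by (simp only: of_nat_le_iff)
      also have "\<dots> = (\<Sum>r<R. int (card (B r)))" by simp
      also have "\<dots> \<le> X" unfolding X_def by (rule sum_mono) (use Bb in auto)
      finally show ?thesis .
    qed
  qed
  then show ?thesis by (simp add: dimU_def T_def X_def)
qed




lemma int_block_bound:
  fixes a c :: int and M k :: nat
  assumes "0 \<le> a" "a < int k" "0 \<le> c" "c < int M"
  shows "int M * a + c < int (k * M)"
proof -
  have "int M * a + c < int M * (a + 1)" using assms by (simp add: algebra_simps)
  also have "\<dots> \<le> int M * int k" using assms by (intro mult_left_mono) auto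
  finally show ?thesis by (simp add: mult.commute)
qed

lemma int_block_unique:
  fixes a a' c c' :: int and M :: nat
  assumes "0 \<le> c" "c < int M" "0 \<le> c'" "c' < int M" "int M * a + c = int M * a' + c'"
  shows "a = a'"
proof -
  have "(int M * a + c) div int M = a" using assms(1,2) by simp
  moreover have "(int M * a' + c') div int M = a'" using assms(3,4) by simp
  ultimately show ?thesis using assms(5) by simp
qed

lemma int_div_lt:
  fixes p :: int and k M :: nat
  assumes "0 \<le> p" "p < int (k * M)" "1 \<le> M"
  shows "p div int M < int k"
proof -
  have e: "int M * (p div int M) + p mod int M = p" by (rule mult_div_mod_eq)
  have "0 \<le> p mod int M" using assms by simp
  then have le: "int M * (p div int M) \<le> p" using e by linarith
  have "int (k * M) = int M * int k" by simp
  then have "int M * (p div int M) < int M * int k" using le assms(2) by linarith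
  then show ?thesis using assms(3) by (simp add: mult_less_cancel_left)
qed

lemma grid_one: "grid n 1 = {\<lambda>_. 0}"
proof (intro set_eqI iffI)
  fix x assume x: "x \<in> grid n 1"
  have "x i = 0" for i using x by (cases "i < n") (auto simp: grid_def)
  then show "x \<in> {\<lambda>_. 0}" by auto
qed (auto simp: grid_def)

lemma subgrid_one: "subgrid n p 1 = {p}"
  unfolding subgrid_def grid_one by auto

lemma subgrid_one_Suc [simp]: "subgrid n p (Suc 0) = {p}"
  using subgrid_one by simp

lemma grid_mono: "K \<le> N \<Longrightarrow> grid n K \<subseteq> grid n N"
  by (auto simp: grid_def)

lemma block_in_grid:
  assumes "\<alpha> \<in> grid n k" "\<kappa> \<in> grid n M"
  shows "(\<lambda>i. int M * \<alpha> i + \<kappa> i) \<in> grid n (k * M)"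
  using assms int_block_bound[of "\<alpha> i" k "\<kappa> i" M for i] by (auto simp: grid_def)

lemma grid_block_decomp:
  assumes M1: "1 \<le> M" and p: "p \<in> grid n (k * M)"
  shows "(\<lambda>i. p i div int M) \<in> grid n k" "(\<lambda>i. p i mod int M) \<in> grid n M"
    "p = (\<lambda>i. int M * (p i div int M) + p i mod int M)"
proof -
  show "(\<lambda>i. p i div int M) \<in> grid n k"
    using p M1 int_div_lt[of "p i" k M for i] by (auto simp: grid_def pos_imp_zdiv_nonneg_iff)
  show "(\<lambda>i. p i mod int M) \<in> grid n M"
    using p M1 by (auto simp: grid_def)
  show "p = (\<lambda>i. int M * (p i div int M) + p i mod int M)"
    by (simp add: mult_div_mod_eq)
qed

lemma cube_bound:
  assumes m2: "m \<ge> 2"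
    and distinct_exps: "\<forall>j<m. \<forall>j'<m. j \<noteq> j' \<longrightarrow> (\<exists>i<n. t j i \<noteq> t j' i)"
    and M1: "1 \<le> M"
  shows "dimU n m a t N \<le> int ((N div M) ^ n) * dimU n m a t M + int (N ^ n - (N div M * M) ^ n) * dimU n m a t 1"
proof -
  define k where "k = N div M"
  define K where "K = k * M"
  have KN: "K \<le> N" unfolding K_def k_def by simp
  define CA where "CA = (\<lambda>\<alpha>. ((\<lambda>i. int M * \<alpha> i), M)) ` grid n k"
  define CB where "CB = (\<lambda>p. (p, 1::nat)) ` (grid n N - grid n K)"
  define CC where "CC = CA \<union> CB"
  have fCC: "finite CC" unfolding CC_def CA_def CB_def by (simp add: finite_grid)
  have sgA: "subgrid n (\<lambda>i. int M * \<alpha> i) M = {(\<lambda>i. int M * \<alpha> i + \<kappa> i) | \<kappa>. \<kappa> \<in> grid n M}" for \<alpha>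
    by (simp add: subgrid_def)
  have zero_grid: "(\<lambda>_. 0) \<in> grid n M" using M1 by (rule zero_in_grid)
  have vA: "(\<lambda>i. int M * \<alpha> i) \<in> grid n K" if "\<alpha> \<in> grid n k" for \<alpha>
    using block_in_grid[OF that zero_grid] by (simp add: K_def)
  have P1: "snd c \<ge> 1 \<and> (\<forall>i\<ge>n. fst c i = 0) \<and> subgrid n (fst c) (snd c) \<subseteq> grid n N" if c: "c \<in> CC" for c
  proof (cases "c \<in> CA")
    case True
    then obtain \<alpha> where \<alpha>: "\<alpha> \<in> grid n k" "c = ((\<lambda>i. int M * \<alpha> i), M)" unfolding CA_def by blast
    have "subgrid n (fst c) (snd c) \<subseteq> grid n K"
      using block_in_grid[OF \<alpha>(1)] \<alpha>(2) by (auto simp: sgA K_def)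
    then have "subgrid n (fst c) (snd c) \<subseteq> grid n N" using grid_mono[OF KN] by blast
    moreover have "\<forall>i\<ge>n. fst c i = 0" using \<alpha> by (auto simp: grid_def)
    ultimately show ?thesis using \<alpha> M1 by auto
  next
    case False
    then have "c \<in> CB" using c by (simp add: CC_def)
    then obtain p where p: "p \<in> grid n N" "c = (p, 1)" unfolding CB_def by blast
    then show ?thesis by (auto simp: grid_def)
  qed
  have inK: "subgrid n (fst c) (snd c) \<subseteq> grid n K" if cA: "c \<in> CA" for c
  proof -
    obtain \<alpha> where \<alpha>: "\<alpha> \<in> grid n k" "c = ((\<lambda>i. int M * \<alpha> i), M)" using cA unfolding CA_def by blast
    show ?thesis using block_in_grid[OF \<alpha>(1)] \<alpha>(2) by (auto simp: sgA K_def)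
  qed
  have P2: "subgrid n (fst c) (snd c) \<inter> subgrid n (fst c') (snd c') = {}"
    if c: "c \<in> CC" and c': "c' \<in> CC" and ne: "c \<noteq> c'" for c c'
  proof -
    have AA: "subgrid n (fst c) (snd c) \<inter> subgrid n (fst c') (snd c') = {}" if c: "c \<in> CA" and c': "c' \<in> CA" and ne: "c \<noteq> c'" for c c'
    proof -
      obtain \<alpha> where \<alpha>: "\<alpha> \<in> grid n k" "c = ((\<lambda>i. int M * \<alpha> i), M)" using c unfolding CA_def by blast
      obtain \<alpha>' where \<alpha>': "\<alpha>' \<in> grid n k" "c' = ((\<lambda>i. int M * \<alpha>' i), M)" using c' unfolding CA_def by blast
      show ?thesis
      proof (rule ccontr)
        assume "subgrid n (fst c) (snd c) \<inter> subgrid n (fst c') (snd c') \<noteq> {}"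
        then obtain \<kappa> \<kappa>' where \<kappa>: "\<kappa> \<in> grid n M" "\<kappa>' \<in> grid n M"
          and e: "(\<lambda>i. int M * \<alpha> i + \<kappa> i) = (\<lambda>i. int M * \<alpha>' i + \<kappa>' i)"
          using \<alpha>(2) \<alpha>'(2) by (auto simp: sgA)
        have "\<alpha> i = \<alpha>' i" for i
        proof (rule int_block_unique)
          show "int M * \<alpha> i + \<kappa> i = int M * \<alpha>' i + \<kappa>' i" using fun_cong[OF e, of i] by simp
          have kb: "0 \<le> \<kappa>0 i \<and> \<kappa>0 i < int M" if "\<kappa>0 \<in> grid n M" for \<kappa>0
            using that M1 by (cases "i < n") (auto simp: grid_def)
          show "0 \<le> \<kappa> i" "\<kappa> i < int M" "0 \<le> \<kappa>' i" "\<kappa>' i < int M"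
            using kb[OF \<kappa>(1)] kb[OF \<kappa>(2)] by auto
        qed
        then have "c = c'" using \<alpha>(2) \<alpha>'(2) by auto
        with ne show False by simp
      qed
    qed
    have AB: "subgrid n (fst c) (snd c) \<inter> subgrid n (fst c') (snd c') = {}" if c: "c \<in> CA" and c': "c' \<in> CB" for c c'
    proof -
      obtain p where p: "p \<in> grid n N - grid n K" "c' = (p, 1)" using c' unfolding CB_def by blast
      show ?thesis using inK[OF c] p by (auto simp: subgrid_one)
    qed
    have BB: "subgrid n (fst c) (snd c) \<inter> subgrid n (fst c') (snd c') = {}" if c: "c \<in> CB" and c': "c' \<in> CB" and ne: "c \<noteq> c'" for c c'
      using c c' ne unfolding CB_def by (auto simp: subgrid_one)
    show ?thesis
      using c c' ne AA AB[of c c'] AB[of c' c] BB[of c c'] unfolding CC_def by blast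
  qed
  have P3: "(\<Union>c\<in>CC. subgrid n (fst c) (snd c)) = grid n N"
  proof
    show "(\<Union>c\<in>CC. subgrid n (fst c) (snd c)) \<subseteq> grid n N" using P1 by blast
    show "grid n N \<subseteq> (\<Union>c\<in>CC. subgrid n (fst c) (snd c))"
    proof
      fix p assume p: "p \<in> grid n N"
      show "p \<in> (\<Union>c\<in>CC. subgrid n (fst c) (snd c))"
      proof (cases "p \<in> grid n K")
        case True
        note D = grid_block_decomp[OF M1 True[unfolded K_def]]
        have "((\<lambda>i. int M * (p i div int M)), M) \<in> CC" unfolding CC_def CA_def
          by (rule UnI1, rule image_eqI[where x="\<lambda>i. p i div int M"]) (use D(1) in auto)
        moreover have "p \<in> subgrid n (\<lambda>i. int M * (p i div int M)) M"
        proof -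
          have "p = (\<lambda>i. int M * (p i div int M) + (\<lambda>i. p i mod int M) i) \<and> (\<lambda>i. p i mod int M) \<in> grid n M"
            using D(2) by (simp add: mult_div_mod_eq)
          then show ?thesis unfolding subgrid_def mem_Collect_eq
            by (intro exI[of _ "\<lambda>i. p i mod int M"])
        qed
        ultimately show ?thesis by (intro UN_I[where a="((\<lambda>i. int M * (p i div int M)), M)"]) simp_all
      next
        case False
        then have "(p, 1) \<in> CC" using p unfolding CC_def CB_def by blast
        then show ?thesis by (intro UN_I[where a="(p, 1)"]) (simp_all add: subgrid_one)
      qed
    qed
  qed
  obtain h where h: "bij_betw h {..<card CC} CC"
    using ex_bij_betw_nat_finite[OF fCC] by (auto simp: atLeast0LessThan)
  define R where "R = card CC"
  have hR: "\<And>r. r < R \<Longrightarrow> h r \<in> CC" using h unfolding R_def bij_betw_def by auto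
  have hinj: "\<And>r r'. r < R \<Longrightarrow> r' < R \<Longrightarrow> r \<noteq> r' \<Longrightarrow> h r \<noteq> h r'"
    using h unfolding R_def bij_betw_def inj_on_def by auto
  have himg: "h ` {..<R} = CC" using h unfolding R_def bij_betw_def by auto
  have main: "dimU n m a t N \<le> (\<Sum>r<R. dimU n m a t (snd (h r)))"
  proof (rule part1[OF m2 distinct_exps, where v="\<lambda>r. fst (h r)" and q="\<lambda>r. snd (h r)"])
    show "\<forall>r<R. 1 \<le> snd (h r) \<and> (\<forall>i\<ge>n. fst (h r) i = 0) \<and> subgrid n (fst (h r)) (snd (h r)) \<subseteq> grid n N"
      using P1 hR by blast
    show "\<forall>r<R. \<forall>r'<R. r \<noteq> r' \<longrightarrow> subgrid n (fst (h r)) (snd (h r)) \<inter> subgrid n (fst (h r')) (snd (h r')) = {}"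
      using P2 hR hinj by blast
    have "(\<Union>r<R. subgrid n (fst (h r)) (snd (h r))) = (\<Union>c\<in>h ` {..<R}. subgrid n (fst c) (snd c))" by simp
    then show "(\<Union>r<R. subgrid n (fst (h r)) (snd (h r))) = grid n N" using P3 himg by simp
  qed
  have "(\<Sum>r<R. dimU n m a t (snd (h r))) = (\<Sum>c\<in>CC. dimU n m a t (snd c))"
    using sum.reindex_bij_betw[OF h, of "\<lambda>c. dimU n m a t (snd c)"] unfolding R_def by simp
  also have "\<dots> = (\<Sum>c\<in>CA. dimU n m a t (snd c)) + (\<Sum>c\<in>CB. dimU n m a t (snd c))"
    unfolding CC_def
  proof (rule sum.union_disjoint)
    show "finite CA" "finite CB" unfolding CA_def CB_def by (simp_all add: finite_grid)
    show "CA \<inter> CB = {}" using vA unfolding CA_def CB_def by auto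
  qed
  also have "(\<Sum>c\<in>CA. dimU n m a t (snd c)) = int (card CA) * dimU n m a t M"
  proof -
    have "(\<Sum>c\<in>CA. dimU n m a t (snd c)) = (\<Sum>c\<in>CA. dimU n m a t M)"
      by (rule sum.cong) (auto simp: CA_def)
    then show ?thesis by simp
  qed
  also have "(\<Sum>c\<in>CB. dimU n m a t (snd c)) = int (card CB) * dimU n m a t 1"
  proof -
    have "(\<Sum>c\<in>CB. dimU n m a t (snd c)) = (\<Sum>c\<in>CB. dimU n m a t 1)"
      by (rule sum.cong) (auto simp: CB_def)
    then show ?thesis by simp
  qed
  also have "card CA = k ^ n"
  proof -
    have "inj_on (\<lambda>\<alpha>. ((\<lambda>i. int M * \<alpha> i), M)) (grid n k)"
      using M1 by (auto simp: inj_on_def fun_eq_iff)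
    then show ?thesis unfolding CA_def by (simp add: card_image card_grid)
  qed
  also have "card CB = N ^ n - K ^ n"
  proof -
    have "inj_on (\<lambda>p. (p, 1::nat)) (grid n N - grid n K)" by (auto simp: inj_on_def)
    then have "card CB = card (grid n N - grid n K)" unfolding CB_def by (simp add: card_image)
    also have "\<dots> = N ^ n - K ^ n"
      by (simp add: card_Diff_subset[OF finite_grid grid_mono[OF KN]] card_grid)
    finally show ?thesis .
  qed
  finally show ?thesis using main by (simp add: k_def K_def)
qed




lemma g_bound:
  assumes m2: "m \<ge> 2"
    and distinct_exps: "\<forall>j<m. \<forall>j'<m. j \<noteq> j' \<longrightarrow> (\<exists>i<n. t j i \<noteq> t j' i)"
    and M1: "1 \<le> M" and MN: "M \<le> N"
  shows "real_of_int (dimU n m a t N) / real N ^ n \<le>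
           real_of_int (dimU n m a t M) / real M ^ n + real_of_int (dimU n m a t 1) * real n * real M / real N"
proof -
  define k where "k = N div M"
  define K where "K = k * M"
  define dN where "dN = real_of_int (dimU n m a t N)"
  define dM where "dM = real_of_int (dimU n m a t M)"
  define d1 where "d1 = real_of_int (dimU n m a t 1)"
  have dM0: "0 \<le> dM" and d10: "0 \<le> d1" unfolding dM_def d1_def using dimU_nonneg[OF m2 distinct_exps] by auto
  have KN: "K \<le> N" unfolding K_def k_def by simp
  have KNM: "real N - real M \<le> real K"
  proof -
    have "N = K + N mod M" unfolding K_def k_def by simp
    moreover have "N mod M < M" using M1 by simp
    ultimately show ?thesis by linarith
  qed
  have N0: "real N > 0" using M1 MN by simp
  have M0: "real M > 0" using M1 by simp
  have cb: "dimU n m a t N \<le> int (k ^ n) * dimU n m a t M + int (N ^ n - K ^ n) * dimU n m a t 1"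
    using cube_bound[OF m2 distinct_exps M1, of a N] unfolding k_def K_def .
  have KnNn: "K ^ n \<le> N ^ n" using KN by (rule power_mono) simp
  have "dN \<le> real (k ^ n) * dM + (real N ^ n - real K ^ n) * d1"
  proof -
    have "real_of_int (dimU n m a t N) \<le> real_of_int (int (k ^ n) * dimU n m a t M + int (N ^ n - K ^ n) * dimU n m a t 1)"
      using cb by linarith
    also have "\<dots> = real (k ^ n) * dM + (real N ^ n - real K ^ n) * d1"
      using KnNn by (simp add: dM_def d1_def of_nat_diff)
    finally show ?thesis unfolding dN_def .
  qed
  define rho where "rho = (real K / real N) ^ n"
  have rho1: "rho \<le> 1" unfolding rho_def using KN N0 by (intro power_le_one) auto
  have kdM: "real (k ^ n) * dM / real N ^ n = rho * (dM / real M ^ n)"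
    using M0 N0 by (simp add: rho_def K_def power_divide power_mult_distrib field_simps)
  have "dN / real N ^ n \<le> (real (k ^ n) * dM + (real N ^ n - real K ^ n) * d1) / real N ^ n"
    using \<open>dN \<le> _\<close> N0 by (simp add: divide_right_mono)
  also have "\<dots> = rho * (dM / real M ^ n) + (1 - rho) * d1"
    using kdM N0 by (simp add: rho_def add_divide_distrib power_divide field_simps)
  also have "\<dots> \<le> dM / real M ^ n + (1 - rho) * d1"
  proof -
    have "rho * (dM / real M ^ n) \<le> 1 * (dM / real M ^ n)"
      using rho1 dM0 M0 by (intro mult_right_mono) auto
    then show ?thesis by simp
  qed
  also have "\<dots> \<le> dM / real M ^ n + (real n * real M / real N) * d1"
  proof -
    have "1 - real n * (real M / real N) \<le> (1 - real M / real N) ^ n"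
      using Bernoulli_inequality[of "- (real M / real N)" n] MN N0 by (simp add: field_simps)
    also have "\<dots> \<le> rho"
    proof -
      have "1 - real M / real N = (real N - real M) / real N" using N0 by (simp add: field_simps)
      also have "\<dots> \<le> real K / real N" using KNM N0 by (intro divide_right_mono) auto
      finally have a1: "1 - real M / real N \<le> real K / real N" .
      have "real M / real N \<le> 1" using MN N0 by simp
      then have a2: "0 \<le> 1 - real M / real N" by simp
      show ?thesis unfolding rho_def by (rule power_mono[OF a1 a2])
    qed
    finally have "1 - rho \<le> real n * real M / real N" by simp
    then have "(1 - rho) * d1 \<le> (real n * real M / real N) * d1" using d10 by (rule mult_right_mono)
    then show ?thesis by simp
  qed
  finally show ?thesis by (simp add: dN_def dM_def d1_def mult.commute mult.left_commute)
qed

lemma limit_part: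
  assumes m2: "m \<ge> 2"
    and distinct_exps: "\<forall>j<m. \<forall>j'<m. j \<noteq> j' \<longrightarrow> (\<exists>i<n. t j i \<noteq> t j' i)"
  shows "(\<lambda>N. real_of_int (dimU n m a t N) / real N ^ n)
            \<longlonglongrightarrow> (INF N\<in>{1..}. real_of_int (dimU n m a t N) / real N ^ n)"
proof -
  define g where "g N = real_of_int (dimU n m a t N) / real N ^ n" for N :: nat
  define L where "L = (INF N\<in>{1..}. g N)"
  have g0: "0 \<le> g N" for N unfolding g_def using dimU_nonneg[OF m2 distinct_exps, of a N] by simp
  have bdd: "bdd_below (g ` {1..})" by (rule bdd_belowI[of _ 0]) (auto simp: g0)
  have Lle: "L \<le> g N" if "N \<ge> 1" for N unfolding L_def by (rule cINF_lower[OF bdd]) (use that in simp)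
  have "g \<longlonglongrightarrow> L"
  proof (rule order_tendstoI)
    fix y assume y: "y < L"
    show "eventually (\<lambda>N. y < g N) sequentially"
      unfolding eventually_sequentially using Lle y by (intro exI[of _ 1]) force
  next
    fix y assume y: "L < y"
    have "Inf (g ` {1..}) < (L + y) / 2" using y by (simp add: L_def)
    moreover have ne: "g ` {1..} \<noteq> {}" by auto
    ultimately have "\<exists>x\<in>g ` {1..}. x < (L + y) / 2" using cInf_less_iff[OF ne bdd] by blast
    then obtain M where M: "M \<ge> 1" "g M < (L + y) / 2" by auto
    define c where "c = real_of_int (dimU n m a t 1) * real n * real M"
    have "(\<lambda>N. c / real N) \<longlonglongrightarrow> 0" by (rule lim_const_over_n)
    then have ev: "eventually (\<lambda>N. c / real N < (y - L) / 2) sequentially"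
      using y by (intro order_tendstoD(2)) auto
    show "eventually (\<lambda>N. g N < y) sequentially"
      using ev eventually_ge_at_top[of M]
    proof eventually_elim
      case (elim N)
      have "g N \<le> g M + c / real N"
        unfolding g_def c_def by (rule g_bound[OF m2 distinct_exps M(1) elim(2)])
      also have "\<dots> < (L + y) / 2 + (y - L) / 2" using elim(1) M(2) by (rule add_strict_mono[rotated])
      also have "\<dots> = y" by (simp add: field_simps)
      finally show ?case .
    qed
  qed
  then show ?thesis unfolding g_def L_def .
qed

theorem mainTheorem1:
  fixes n m :: nat and a :: "nat \<Rightarrow> real" and t :: "nat \<Rightarrow> nat \<Rightarrow> int"
  assumes m2: "m \<ge> 2"
    and distinct_exps: "\<forall>j<m. \<forall>j'<m. j \<noteq> j' \<longrightarrow> (\<exists>i<n. t j i \<noteq> t j' i)"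
  shows "(\<forall>N R (v :: nat \<Rightarrow> nat \<Rightarrow> int) (q :: nat \<Rightarrow> nat).
            N \<ge> 1 \<and>
            (\<forall>r<R. q r \<ge> 1 \<and> (\<forall>i\<ge>n. v r i = 0) \<and> subgrid n (v r) (q r) \<subseteq> grid n N) \<and>
            (\<forall>r<R. \<forall>r'<R. r \<noteq> r' \<longrightarrow> subgrid n (v r) (q r) \<inter> subgrid n (v r') (q r') = {}) \<and>
            (\<Union>r<R. subgrid n (v r) (q r)) = grid n N
          \<longrightarrow> dimU n m a t N \<le> (\<Sum>r<R. dimU n m a t (q r)))
       \<and> ((\<lambda>N. real_of_int (dimU n m a t N) / real N ^ n)
            \<longlonglongrightarrow> (INF N\<in>{1..}. real_of_int (dimU n m a t N) / real N ^ n))"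
proof (intro conjI allI impI)
  fix N R :: nat and v :: "nat \<Rightarrow> nat \<Rightarrow> int" and q :: "nat \<Rightarrow> nat"
  assume h: "N \<ge> 1 \<and>
            (\<forall>r<R. q r \<ge> 1 \<and> (\<forall>i\<ge>n. v r i = 0) \<and> subgrid n (v r) (q r) \<subseteq> grid n N) \<and>
            (\<forall>r<R. \<forall>r'<R. r \<noteq> r' \<longrightarrow> subgrid n (v r) (q r) \<inter> subgrid n (v r') (q r') = {}) \<and>
            (\<Union>r<R. subgrid n (v r) (q r)) = grid n (N :: nat)"
  show "dimU n m a t N \<le> (\<Sum>r<R. dimU n m a t (q r))"
    by (rule part1[OF m2 distinct_exps, where R=R and v=v and q=q]) (use h in blast)+
next
  show "(\<lambda>N. real_of_int (dimU n m a t N) / real N ^ n)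
            \<longlonglongrightarrow> (INF N\<in>{1..}. real_of_int (dimU n m a t N) / real N ^ n)"
    by (rule limit_part[OF m2 distinct_exps])
qed


end
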